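(* Let $\gamma:S^n\to\mathbb{R}_+$ be continuous, and let $\widetilde W_\gamma=\alpha_N^{-1}\circ Id(\mathcal W_\gamma)\subset S^{n+1}$ be the spherical Wulff shape. Suppose $\widetilde W_\gamma$ is of constant width. Then (1) $\Delta(\widetilde W_\gamma)+\mathrm{diam}(\widetilde W_\gamma^\circ)=\pi$; (2) $\Delta(\widetilde W_\gamma)+\Delta(\widetilde W_\gamma^\circ)=\pi$; (3) $\mathrm{diam}(\widetilde W_\gamma)+\Delta(\widetilde W_\gamma^\circ)=\pi$; (4) $\mathrm{diam}(\widetilde W_\gamma)+\mathrm{diam}(\widetilde W_\gamma^\circ)=\pi$.
   Context: Wulff shapes. For a continuous $\gamma:S^n\to\mathbb{R}_+$ (where $\mathbb{R}_+$ denotes the positive reals), the Wulff shape is $\mathcal W_\gamma=\bigcap_{\theta\in S^n}\{x\in\mathbb{R}^{n+1}:x\cdot\theta\le\gamma(\theta)\}$. It is a convex body in $\mathbb{R}^{n+1}$ containing the origin in its interior. The maps. Let $Id:\mathbb{R}^{n+1}\to\mathbb{R}^{n+1}\times\{1\}$, $Id(x)=(x,1)$. Let $N=(0,\dots,0,1)\in S^{n+1}\subset\mathbb{R}^{n+2}$, and let $S^{n+1}_{N,+}=\{Q\in S^{n+1}:Q_{n+2}>0\}$. Let $\alpha_N:S^{n+1}_{N,+}\to\mathbb{R}^{n+1}\times\{1\}$ be the central projection $\alpha_N(P_1,\dots,P_{n+2})=(P_1/P_{n+2},\dots,P_{n+1}/P_{n+2},1)$. Spherical notions on $S^{n+1}$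 (with origin $O$). The spherical distance is $|PQ|=\arccos(\overrightarrow{OP}\cdot\overrightarrow{OQ})$. The closed hemisphere centered at $P$ is $S^+_P=\{Q:\overrightarrow{OP}\cdot\overrightarrow{OQ}\ge0\}$. The spherical polar of a set $W$ is $W^\circ=\bigcap_{P\in W}S^+_P$. A hemisphere $S^+_Q$ supports a convex body $K$ at $P\in\partial K$ if $K\subseteq S^+_Q$ and $\overrightarrow{OQ}\cdot\overrightarrow{OP}=0$. For non-equal, non-opposite hemispheres, the lune $S^+_P\cap S^+_Q$ has thickness $\Delta(S^+_P\cap S^+_Q)=\pi-|PQ|$. Width and diameter. For a supporting hemisphere $S^+_P$ of $K$, $\mathrm{width}_{S^+_P}(K)=\min\{\Delta(S^+_P\cap S^+_Q):K\subset S^+_Q\}$. $K$ is of constant width if all these widths are equal; this common value is denoted $\Delta(K)$. $\mathrm{diam}(K)=\max\{|PQ|:P,Q\in K\}$. *)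

theory Defs
  imports "HOL-Analysis.Analysis"
begin

text \<open>R^{n+1} is modelled by a Euclidean space 'a, R^{n+2} by 'a \<times> real.
  S^n = sphere 0 1 in 'a, S^{n+1} = sphere 0 1 in 'a \<times> real, N = (0,1).\<close>

definition wulff :: "('a::euclidean_space \<Rightarrow> real) \<Rightarrow> 'a set" where
  "wulff \<gamma> = (\<Inter>\<theta>\<in>sphere 0 1. {x. x \<bullet> \<theta> \<le> \<gamma> \<theta>})"

definition Id_emb :: "'a::euclidean_space \<Rightarrow> 'a \<times> real" where
  "Id_emb x = (x, 1)"

definition northN :: "'a::euclidean_space \<times> real" where
  "northN = (0, 1)"

definition upper_hemi :: "('a::euclidean_space \<times> real) set" where
  "upper_hemi = {Q \<in> sphere 0 1. snd Q > 0}"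

definition alphaN :: "'a::euclidean_space \<times> real \<Rightarrow> 'a \<times> real" where
  "alphaN P = ((1 / snd P) *\<^sub>R fst P, 1)"

definition sph_wulff :: "('a::euclidean_space \<Rightarrow> real) \<Rightarrow> ('a \<times> real) set" where
  "sph_wulff \<gamma> = {P \<in> upper_hemi. alphaN P \<in> Id_emb ` wulff \<gamma>}"

definition sph_dist :: "'a::euclidean_space \<times> real \<Rightarrow> 'a \<times> real \<Rightarrow> real" where
  "sph_dist P Q = arccos (P \<bullet> Q)"

definition hemi :: "'a::euclidean_space \<times> real \<Rightarrow> ('a \<times> real) set" where
  "hemi P = {Q \<in> sphere 0 1. P \<bullet> Q \<ge> 0}"

definition sph_polar :: "('a::euclidean_space \<times> real) set \<Rightarrow> ('a \<times> real) set" where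
  "sph_polar W = sphere 0 1 \<inter> (\<Inter>P\<in>W. hemi P)"

definition sph_boundary :: "('a::euclidean_space \<times> real) set \<Rightarrow> ('a \<times> real) set" where
  "sph_boundary K = closure K \<inter> closure (sphere 0 1 - K)"

definition supports_at :: "'a::euclidean_space \<times> real \<Rightarrow> ('a \<times> real) set \<Rightarrow> 'a \<times> real \<Rightarrow> bool" where
  "supports_at Q K P \<longleftrightarrow> Q \<in> sphere 0 1 \<and> P \<in> sph_boundary K \<and> K \<subseteq> hemi Q \<and> Q \<bullet> P = 0"

definition supporting :: "'a::euclidean_space \<times> real \<Rightarrow> ('a \<times> real) set \<Rightarrow> bool" where
  "supporting Q K \<longleftrightarrow> (\<exists>P. supports_at Q K P)"

text \<open>Thickness of the lune S^+_P \<inter> S^+_Q (for non-equal, non-opposite hemispheres).\<close>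
definition lune_thickness :: "'a::euclidean_space \<times> real \<Rightarrow> 'a \<times> real \<Rightarrow> real" where
  "lune_thickness P Q = pi - sph_dist P Q"

definition width :: "'a::euclidean_space \<times> real \<Rightarrow> ('a \<times> real) set \<Rightarrow> real" where
  "width P K = (INF Q \<in> {Q \<in> sphere 0 1. Q \<noteq> P \<and> Q \<noteq> - P \<and> K \<subseteq> hemi Q}. lune_thickness P Q)"

definition constant_width :: "('a::euclidean_space \<times> real) set \<Rightarrow> bool" where
  "constant_width K \<longleftrightarrow> (\<exists>w. \<forall>P. supporting P K \<longrightarrow> width P K = w)"

text \<open>Delta(K): the common value of the widths (meaningful when K has constant width).\<close>
definition Delta :: "('a::euclidean_space \<times> real) set \<Rightarrow> real" where
  "Delta K = (SOME w. \<forall>P. supporting P K \<longrightarrow> width P K = w)"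

definition sph_diam :: "('a::euclidean_space \<times> real) set \<Rightarrow> real" where
  "sph_diam K = (SUP PQ \<in> K \<times> K. sph_dist (fst PQ) (snd PQ))"

end

theory Submission
  imports Defs
begin

definition pol :: "'b::euclidean_space set \<Rightarrow> 'b set" where
  "pol B = {Z \<in> sphere 0 1. \<forall>b\<in>B. 0 \<le> b \<bullet> Z}"

lemma pol_cone:
  fixes v :: "'b::euclidean_space"
  assumes "v \<noteq> 0" "\<forall>b\<in>B. 0 \<le> b \<bullet> v"
  shows "v /\<^sub>R norm v \<in> pol B"
  using assms by (auto simp: pol_def inner_commute)

lemma pol_sphere: "pol B \<subseteq> sphere 0 1"
  by (auto simp: pol_def)

lemma closed_pol: "closed (pol (B::'b::euclidean_space set))"
proof -
  have "pol B = sphere 0 1 \<inter> (\<Inter>b\<in>B. {Z. 0 \<le> b \<bullet> Z})"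
    by (auto simp: pol_def)
  moreover have "closed (\<Inter>b\<in>B. {Z::'b. 0 \<le> b \<bullet> Z})"
    by (intro closed_INT ballI closed_Collect_le continuous_intros)
  ultimately show ?thesis by (simp add: closed_Int)
qed

lemma compact_pol: "compact (pol (B::'b::euclidean_space set))"
  unfolding compact_eq_bounded_closed
  using closed_pol pol_sphere bounded_sphere bounded_subset by blast

lemma unit_inner_le: "norm (x::'b::real_inner) = 1 \<Longrightarrow> norm y = 1 \<Longrightarrow> \<bar>x \<bullet> y\<bar> \<le> 1"
  using Cauchy_Schwarz_ineq2[of x y] by simp

lemma unit_inner_eq1: "norm (x::'b::real_inner) = 1 \<Longrightarrow> norm y = 1 \<Longrightarrow> x \<bullet> y = 1 \<Longrightarrow> x = y"
proof -
  assume a: "norm x = 1" "norm y = 1" "x \<bullet> y = 1"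
  have "norm (x - y) ^ 2 = 0"
    using a by (simp add: power2_norm_eq_inner inner_diff inner_commute norm_eq_1)
  then show "x = y" by simp
qed

lemma sphere_inner_self: "x \<in> sphere (0::'b::real_inner) 1 \<Longrightarrow> x \<bullet> x = 1"
  by (simp add: norm_eq_1)

definition mi :: "'b::euclidean_space set \<Rightarrow> 'b \<Rightarrow> real" where
  "mi B X = (INF Z\<in>B. X \<bullet> Z)"

lemma mi_attained:
  fixes B :: "'b::euclidean_space set"
  assumes "compact B" "B \<noteq> {}"
  shows "\<exists>Y\<in>B. mi B X = X \<bullet> Y" and "\<And>Z. Z \<in> B \<Longrightarrow> mi B X \<le> X \<bullet> Z"
proof -
  have "continuous_on B (\<lambda>Z. X \<bullet> Z)" by (intro continuous_intros)
  then obtain Y where Y: "Y \<in> B" "\<forall>Z\<in>B. X \<bullet> Y \<le> X \<bullet> Z"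
    using continuous_attains_inf[OF assms] by blast
  have eq: "mi B X = X \<bullet> Y"
    unfolding mi_def by (rule cInf_eq_minimum) (use Y in auto)
  show "\<exists>Y\<in>B. mi B X = X \<bullet> Y" using eq Y by blast
  show "\<And>Z. Z \<in> B \<Longrightarrow> mi B X \<le> X \<bullet> Z" using eq Y by simp
qed

definition md :: "'b::euclidean_space set \<Rightarrow> real" where
  "md B = (INF p\<in>B\<times>B. fst p \<bullet> snd p)"

lemma md_attained:
  fixes B :: "'b::euclidean_space set"
  assumes "compact B" "B \<noteq> {}"
  shows "\<exists>P\<in>B. \<exists>Q\<in>B. md B = P \<bullet> Q" and "\<And>P Q. P \<in> B \<Longrightarrow> Q \<in> B \<Longrightarrow> md B \<le> P \<bullet> Q"
proof -
  have c: "compact (B \<times> B)" using assms by (simp add: compact_Times)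
  have "continuous_on (B \<times> B) (\<lambda>p. fst p \<bullet> snd p)" by (intro continuous_intros)
  moreover have "B \<times> B \<noteq> {}" using assms by simp
  ultimately obtain p where p: "p \<in> B \<times> B" "\<forall>q\<in>B\<times>B. fst p \<bullet> snd p \<le> fst q \<bullet> snd q"
    using continuous_attains_inf[OF c] by blast
  have eq: "md B = fst p \<bullet> snd p"
    unfolding md_def by (rule cInf_eq_minimum) (use p in auto)
  show "\<exists>P\<in>B. \<exists>Q\<in>B. md B = P \<bullet> Q" using eq p by (auto simp: mem_Times_iff)
  show "\<And>P Q. P \<in> B \<Longrightarrow> Q \<in> B \<Longrightarrow> md B \<le> P \<bullet> Q" using eq p by force
qed

lemma norm_normalize_close:
  fixes v u :: "'b::real_normed_vector"
  assumes "norm u = 1" "v \<noteq> 0"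
  shows "norm (v /\<^sub>R norm v - u) \<le> 2 * norm (v - u)"
proof -
  have e: "v /\<^sub>R norm v - v = (1/norm v - 1) *\<^sub>R v" by (simp add: scaleR_diff_left divide_inverse)
  have e2: "(1/norm v - 1) * norm v = 1 - norm v" using assms(2) by (simp add: field_simps)
  have "norm (v /\<^sub>R norm v - v) = \<bar>1/norm v - 1\<bar> * norm v" unfolding e by simp
  also have "\<dots> = \<bar>1 - norm v\<bar>" using e2 by (metis abs_mult abs_norm_cancel)
  also have "\<dots> \<le> norm (v - u)" using norm_triangle_ineq3[of u v] assms(1)
    by (simp add: abs_minus_commute norm_minus_commute)
  finally have "norm (v /\<^sub>R norm v - v) \<le> norm (v - u)" .
  then show ?thesis
    using norm_triangle_ineq[of "v /\<^sub>R norm v - v" "v - u"] by simp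
qed


lemma aux_PL:
  fixes c t d :: real
  assumes "\<bar>c\<bar> < 1" "0 < t" "t \<le> 1/2" "1 \<le> d" "d \<le> 1 + t^2*(1-c^2)/2"
  shows "(c - t*(1-c^2))/d < c"
proof -
  have s2: "0 < 1 - c^2" using assms(1) abs_square_less_1[of c] by simp
  have dpos: "0 < d" using assms by simp
  define n where "n = c - t*(1-c^2)"
  have nc: "n < c" using s2 assms(2) by (simp add: n_def)
  have "n / d < c"
  proof (cases "0 \<le> c")
    case True
    show ?thesis
    proof (cases "n \<le> 0")
      case True
      have nd: "n/d \<le> 0" using True dpos by (simp add: divide_nonpos_pos)
      show ?thesis
      proof (cases "c = 0")
        case True
        then have "n < 0" using nc by simp
        then show ?thesis using dpos True assms(2) by (simp add: divide_neg_pos)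
      next
        case False
        then show ?thesis using nd \<open>0 \<le> c\<close> by linarith
      qed
    next
      case False
      have "n * 1 \<le> n * d" using False assms(4) by (intro mult_left_mono) auto
      then have "n/d \<le> n" using dpos by (simp add: divide_le_eq)
      then show ?thesis using nc by linarith
    qed
  next
    case False
    have cd: "c * (1 + t^2*(1-c^2)/2) \<le> c * d" using False assms(5) by (intro mult_left_mono_neg) auto
    have "c*t \<ge> (-1)*t" using assms(1,2) by (intro mult_right_mono) auto
    then have "1 + c*t/2 > 0" using assms(3) by linarith
    then have "t*(1-c^2)*(1 + c*t/2) > 0" using s2 assms(2) by simp
    then have "n < c * (1 + t^2*(1-c^2)/2)" by (simp add: n_def algebra_simps power2_eq_square)
    then have "n < c * d" using cd by linarith
    then show ?thesis using dpos by (simp add: divide_less_eq mult.commute)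
  qed
  then show ?thesis by (simp add: n_def)
qed

lemma normalize_inner: "(v /\<^sub>R norm v) \<bullet> w = (v \<bullet> w) / norm v"
  by (simp add: divide_inverse mult.commute)

lemma sqrt_bound: "0 \<le> (u::real) \<Longrightarrow> sqrt (1 + u) \<le> 1 + u/2"
  by (rule real_le_lsqrt) (auto simp: power2_eq_square algebra_simps)

locale cw =
  fixes K :: "'b::euclidean_space set" and N E0 :: 'b
  assumes N: "norm N = 1" and E0: "norm E0 = 1" "E0 \<bullet> N = 0"
    and Ksph: "K \<subseteq> sphere 0 1" and Kcpt: "compact K"
    and Kpos: "\<And>Z. Z \<in> K \<Longrightarrow> 0 < N \<bullet> Z"
    and Knbh: "\<exists>e>0. \<forall>Z\<in>sphere 0 1. dist Z N < e \<longrightarrow> Z \<in> K"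
    and bip: "pol (pol K) = K"
begin

abbreviation "L \<equiv> pol K"

lemma NK: "N \<in> K"
  using Knbh N by auto

lemma Kne: "K \<noteq> {}" using NK by auto

lemma Lcpt: "compact L" by (rule compact_pol)
lemma Lsph: "L \<subseteq> sphere 0 1" by (rule pol_sphere)

lemma NL: "N \<in> L"
  using N Kpos by (auto simp: pol_def inner_commute less_imp_le)

lemma Lne: "L \<noteq> {}" using NL by auto

lemma KpolL: "K = pol L" using bip by simp

lemma KL_inner: "X \<in> K \<Longrightarrow> P \<in> L \<Longrightarrow> 0 \<le> P \<bullet> X \<and> 0 \<le> X \<bullet> P"
  by (auto simp: pol_def inner_commute)

lemma unitK: "X \<in> K \<Longrightarrow> norm X = 1" using Ksph by auto
lemma unitL: "P \<in> L \<Longrightarrow> norm P = 1" using Lsph by auto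

lemma Lpos: assumes "P \<in> L" shows "0 < N \<bullet> P"
proof (rule ccontr)
  assume neg: "\<not> 0 < N \<bullet> P"
  obtain e where e: "e > 0" "\<forall>Z\<in>sphere 0 1. dist Z N < e \<longrightarrow> Z \<in> K" using Knbh by blast
  define t where "t = min (e/4) (1/2)"
  have t: "0 < t" "t \<le> 1/2" "t < e/2" using e by (auto simp: t_def)
  define v where "v = N - t *\<^sub>R P"
  have nP: "norm P = 1" using assms unitL by blast
  have nv: "norm (v - N) = t" using t nP by (simp add: v_def)
  have "norm v \<ge> 1 - t" using norm_triangle_ineq2[of N "t *\<^sub>R P"] N nP t by (simp add: v_def)
  then have v0: "v \<noteq> 0" using t by auto
  have "dist (v /\<^sub>R norm v) N \<le> 2 * t"
    using norm_normalize_close[OF N v0] nv by (simp add: dist_norm)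
  then have "v /\<^sub>R norm v \<in> K" using e t v0 by auto
  then have "0 \<le> (v /\<^sub>R norm v) \<bullet> P" using assms by (auto simp: pol_def)
  moreover have "v \<bullet> P < 0"
  proof -
    have PP: "P \<bullet> P = 1" using nP by (simp add: norm_eq_1)
    have "v \<bullet> P = N \<bullet> P - t" by (simp add: v_def inner_diff_left PP)
    then show ?thesis using neg t by simp
  qed
  moreover have "(v /\<^sub>R norm v) \<bullet> P = (v \<bullet> P) / norm v" by (rule normalize_inner)
  moreover have "(v \<bullet> P) / norm v < 0" using \<open>v \<bullet> P < 0\<close> v0 by (simp add: divide_neg_pos)
  ultimately show False by linarith
qed

lemma negL: "P \<in> L \<Longrightarrow> - P \<notin> L"
  using Lpos[of P] Lpos[of "-P"] by auto

lemma negK: "X \<in> K \<Longrightarrow> - X \<notin> K"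
  using Kpos[of X] Kpos[of "-X"] by auto

lemma Kmin: "\<exists>m>0. \<forall>Z\<in>K. m \<le> N \<bullet> Z"
proof -
  have "continuous_on K (\<lambda>Z. N \<bullet> Z)" by (intro continuous_intros)
  then obtain Z0 where "Z0 \<in> K" "\<forall>Z\<in>K. N \<bullet> Z0 \<le> N \<bullet> Z"
    using continuous_attains_inf[OF Kcpt Kne] by blast
  then show ?thesis using Kpos by blast
qed

lemma Lother: "\<exists>P\<in>L. P \<noteq> N"
proof -
  obtain m where m: "m > 0" "\<forall>Z\<in>K. m \<le> N \<bullet> Z" using Kmin by blast
  define v where "v = N + (m/2) *\<^sub>R E0"
  have vN: "v \<bullet> N = 1" using N E0 by (simp add: v_def inner_add_left norm_eq_1)
  then have v0: "v \<noteq> 0" by auto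
  have "\<forall>b\<in>K. 0 \<le> b \<bullet> v"
  proof
    fix b assume b: "b \<in> K"
    have "\<bar>b \<bullet> E0\<bar> \<le> 1" using unit_inner_le[OF unitK[OF b] E0(1)] .
    then have e1: "-1 \<le> b \<bullet> E0" by (simp add: abs_le_iff)
    have e2: "b \<bullet> v = b \<bullet> N + (m/2) * (b \<bullet> E0)" by (simp add: v_def inner_add_right)
    have e3: "m \<le> b \<bullet> N" using m b inner_commute[of b N] by metis
    have "(m/2) * (-1) \<le> (m/2) * (b \<bullet> E0)" using e1 m(1) by (intro mult_left_mono) auto
    then show "0 \<le> b \<bullet> v" using e2 e3 m(1) by linarith
  qed
  then have P: "v /\<^sub>R norm v \<in> L" by (rule pol_cone[OF v0])
  have "v /\<^sub>R norm v \<noteq> N"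
  proof
    assume "v /\<^sub>R norm v = N"
    then have "(v /\<^sub>R norm v) \<bullet> E0 = 0" using E0 by (simp add: inner_commute)
    moreover have "v \<bullet> E0 = m/2"
    proof -
      have "v \<bullet> E0 = N \<bullet> E0 + (m/2) * (E0 \<bullet> E0)" by (simp add: v_def inner_add_left)
      moreover have "N \<bullet> E0 = 0" using E0(2) inner_commute[of N E0] by simp
      moreover have "E0 \<bullet> E0 = 1" using E0(1) by (simp add: norm_eq_1)
      ultimately show ?thesis by simp
    qed
    ultimately show False using m v0 by simp
  qed
  then show ?thesis using P by blast
qed

definition "bdL = {P \<in> L. \<exists>X\<in>K. P \<bullet> X = 0}"
definition "bdK = {X \<in> K. \<exists>P\<in>L. X \<bullet> P = 0}"

lemma PL:
  assumes P: "P \<in> L" and int: "\<forall>X\<in>K. 0 < P \<bullet> X" and Q: "norm Q = 1" "Q \<noteq> P" "Q \<noteq> - P"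
  shows "\<exists>P'\<in>L. P' \<bullet> Q < P \<bullet> Q"
proof -
  have nP: "norm P = 1" using P unitL by blast
  have "continuous_on K (\<lambda>X. P \<bullet> X)" by (intro continuous_intros)
  then obtain X0 where X0: "X0 \<in> K" "\<forall>X\<in>K. P \<bullet> X0 \<le> P \<bullet> X"
    using continuous_attains_inf[OF Kcpt Kne] by blast
  define \<epsilon> where "\<epsilon> = P \<bullet> X0"
  have eps: "0 < \<epsilon>" "\<forall>X\<in>K. \<epsilon> \<le> P \<bullet> X" using X0 int by (auto simp: \<epsilon>_def)
  define c where "c = P \<bullet> Q"
  have "\<bar>c\<bar> \<le> 1" using unit_inner_le[OF nP Q(1)] by (simp add: c_def)
  moreover have "c \<noteq> 1" using unit_inner_eq1[OF nP Q(1)] Q(2) by (auto simp: c_def)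
  moreover have "c \<noteq> -1"
  proof
    assume "c = -1"
    then have "(-P) \<bullet> Q = 1" by (simp add: c_def)
    then have "-P = Q" using unit_inner_eq1[of "-P" Q] nP Q(1) by simp
    then show False using Q(3) by auto
  qed
  ultimately have c1: "\<bar>c\<bar> < 1" by linarith
  define D where "D = c *\<^sub>R P - Q"
  define t where "t = min (\<epsilon>/4) (1/2)"
  have t: "0 < t" "t \<le> 1/2" "t < \<epsilon>/2" using eps by (auto simp: t_def)
  define v where "v = P + t *\<^sub>R D"
  have PD: "P \<bullet> D = 0" using nP by (simp add: D_def inner_diff_right c_def norm_eq_1)
  have DD: "D \<bullet> D = 1 - c^2" using nP Q(1)
    by (simp add: D_def inner_diff_right inner_diff_left c_def norm_eq_1 inner_commute power2_eq_square)
  have vv: "v \<bullet> v = 1 + t^2 * (1 - c^2)"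
    using nP PD DD by (simp add: v_def inner_add_left inner_add_right inner_commute norm_eq_1 power2_eq_square)
  have vQ: "v \<bullet> Q = c - t * (1 - c^2)"
    using Q(1) by (simp add: v_def D_def inner_add_left inner_diff_left c_def norm_eq_1 power2_eq_square algebra_simps)
  have pos: "\<forall>b\<in>K. 0 < b \<bullet> v"
  proof
    fix b assume b: "b \<in> K"
    have nb: "norm b = 1" using unitK[OF b] .
    have "\<bar>b \<bullet> P\<bar> \<le> 1" "\<bar>b \<bullet> Q\<bar> \<le> 1" using unit_inner_le[OF nb nP] unit_inner_le[OF nb Q(1)] by auto
    moreover have "b \<bullet> v = b \<bullet> P + t * (c * (b \<bullet> P) - b \<bullet> Q)"
      by (simp add: v_def D_def inner_add_right inner_diff_right)
    moreover have "\<epsilon> \<le> b \<bullet> P" using eps(2) b inner_commute[of P b] by metis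
    moreover have "\<bar>c * (b \<bullet> P)\<bar> \<le> 1" using c1 \<open>\<bar>b \<bullet> P\<bar> \<le> 1\<close>
      unfolding abs_mult by (intro mult_le_one) auto
    ultimately have "-2 \<le> c * (b \<bullet> P) - b \<bullet> Q" by (simp add: abs_le_iff)
    then have "t * (-2) \<le> t * (c * (b \<bullet> P) - b \<bullet> Q)" using t by (intro mult_left_mono) auto
    then show "0 < b \<bullet> v" using t \<open>\<epsilon> \<le> b \<bullet> P\<close> \<open>b \<bullet> v = _\<close> by linarith
  qed
  have v0: "v \<noteq> 0" using pos NK by fastforce
  have L': "v /\<^sub>R norm v \<in> L" using pol_cone[OF v0] pos by (simp add: less_imp_le)
  have nv: "norm v = sqrt (1 + t^2 * (1 - c^2))" using vv by (simp add: norm_eq_sqrt_inner)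
  have s2: "0 \<le> 1 - c^2" using c1 abs_square_less_1[of c] by simp
  have d1: "1 \<le> norm v" using nv s2 by simp
  have d2: "norm v \<le> 1 + t^2 * (1 - c^2) / 2" using nv sqrt_bound[of "t^2 * (1 - c^2)"] s2 by simp
  have "(v /\<^sub>R norm v) \<bullet> Q = (c - t * (1 - c^2)) / norm v" using vQ normalize_inner by metis
  also have "\<dots> < c" by (rule aux_PL[OF c1 t(1) t(2) d1 d2])
  finally have "(v /\<^sub>R norm v) \<bullet> Q < P \<bullet> Q" by (simp only: c_def)
  then show ?thesis using L' by blast
qed

lemma bdL_ne: "bdL \<noteq> {}"
proof -
  have "continuous_on L (\<lambda>P. N \<bullet> P)" by (intro continuous_intros)
  then obtain P0 where P0: "P0 \<in> L" "\<forall>P\<in>L. N \<bullet> P0 \<le> N \<bullet> P"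
    using continuous_attains_inf[OF Lcpt Lne] by blast
  show ?thesis
  proof (cases "\<forall>X\<in>K. 0 < P0 \<bullet> X")
    case False
    then obtain X where "X \<in> K" "\<not> 0 < P0 \<bullet> X" by blast
    then have "P0 \<bullet> X = 0" using KL_inner[of X P0] P0 by auto
    then show ?thesis using P0 \<open>X \<in> K\<close> by (auto simp: bdL_def)
  next
    case True
    have "N \<noteq> P0"
    proof
      assume "N = P0"
      obtain P1 where P1: "P1 \<in> L" "P1 \<noteq> N" using Lother by blast
      have "N \<bullet> P1 \<noteq> 1" using unit_inner_eq1[OF N unitL[OF P1(1)]] P1 by auto
      moreover have "N \<bullet> P1 \<le> 1" using unit_inner_le[OF N unitL[OF P1(1)]] by simp
      moreover have "N \<bullet> N \<le> N \<bullet> P1" using P0 P1 \<open>N = P0\<close> by auto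
      ultimately show False using N by (simp add: norm_eq_1)
    qed
    moreover have "N \<noteq> - P0" using Lpos[OF P0(1)] N by (auto simp: norm_eq_1)
    ultimately obtain P' where "P' \<in> L" "P' \<bullet> N < P0 \<bullet> N"
      using PL[OF P0(1) True N] by auto
    moreover have "N \<bullet> P0 \<le> N \<bullet> P'" using P0 \<open>P' \<in> L\<close> by blast
    ultimately show ?thesis by (simp add: inner_commute)
  qed
qed

end

lemma bessel2:
  fixes X P Z :: "'b::real_inner"
  assumes "norm X = 1" "norm P = 1" "X \<bullet> P = 0" "norm Z = 1"
  shows "(X \<bullet> Z)^2 + (P \<bullet> Z)^2 \<le> 1"
proof -
  define a where "a = X \<bullet> Z"
  define b where "b = P \<bullet> Z"
  have XX: "X \<bullet> X = 1" and PP: "P \<bullet> P = 1" and ZZ: "Z \<bullet> Z = 1"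
    using assms by (simp_all add: norm_eq_1)
  have PX: "P \<bullet> X = 0" using assms(3) by (simp add: inner_commute)
  have ZX: "Z \<bullet> X = a" and ZP: "Z \<bullet> P = b" by (simp_all add: a_def b_def inner_commute)
  have "0 \<le> (Z - a *\<^sub>R X - b *\<^sub>R P) \<bullet> (Z - a *\<^sub>R X - b *\<^sub>R P)" by simp
  also have "\<dots> = 1 - a^2 - b^2"
    by (simp add: inner_diff_left inner_diff_right XX PP ZZ PX assms(3) ZX ZP a_def[symmetric] b_def[symmetric] power2_eq_square algebra_simps)
  finally show ?thesis by (simp add: a_def b_def)
qed

lemma cap_lemma:
  fixes X P :: "'b::euclidean_space"
  assumes X: "norm X = 1" and P: "norm P = 1" and XP: "X \<bullet> P = 0"
    and s: "0 \<le> \<sigma>" "\<sigma> \<le> 1" and U: "U \<subseteq> sphere 0 1"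
    and h: "\<forall>Z\<in>U. \<sigma> \<le> X \<bullet> Z \<and> 0 \<le> P \<bullet> Z"
  shows "(- \<sigma>) *\<^sub>R P + sqrt (1 - \<sigma>^2) *\<^sub>R X \<in> pol U"
proof -
  define s where "s = sqrt (1 - \<sigma>^2)"
  have s2: "s^2 = 1 - \<sigma>^2" "0 \<le> s" using s by (simp_all add: s_def power_le_one)
  have XX: "X \<bullet> X = 1" and PP: "P \<bullet> P = 1" using X P by (simp_all add: norm_eq_1)
  have PX: "P \<bullet> X = 0" using XP by (simp add: inner_commute)
  have ss: "s * s = 1 - \<sigma> * \<sigma>" using s2(1) by (simp add: power2_eq_square)
  have n: "norm ((- \<sigma>) *\<^sub>R P + s *\<^sub>R X) = 1"
    unfolding norm_eq_1
    by (simp add: inner_add_left inner_add_right inner_diff_left inner_diff_right XX PP PX XP ss)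
  have "\<forall>Z\<in>U. 0 \<le> Z \<bullet> ((- \<sigma>) *\<^sub>R P + s *\<^sub>R X)"
  proof
    fix Z assume Z: "Z \<in> U"
    define x where "x = X \<bullet> Z"
    define p where "p = P \<bullet> Z"
    have hx: "\<sigma> \<le> x" "0 \<le> p" using h Z by (auto simp: x_def p_def)
    have b: "x^2 + p^2 \<le> 1" using bessel2[OF X P XP] Z U by (auto simp: x_def p_def)
    have "(\<sigma> * p)^2 \<le> (s * x)^2"
    proof -
      have "(\<sigma> * p)^2 = \<sigma>^2 * p^2" by (simp add: power_mult_distrib)
      also have "\<dots> \<le> \<sigma>^2 * (1 - x^2)" using b by (intro mult_left_mono) auto
      also have "\<dots> \<le> (1 - \<sigma>^2) * x^2"
      proof -
        have "\<sigma>^2 \<le> x^2" using hx s by (intro power_mono) auto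
        then show ?thesis by (simp add: algebra_simps)
      qed
      also have "\<dots> = (s * x)^2" using s2 by (simp add: power_mult_distrib)
      finally show ?thesis .
    qed
    moreover have "0 \<le> s * x" using s2 hx s by simp
    ultimately have "\<sigma> * p \<le> s * x" by (rule power2_le_imp_le)
    moreover have "Z \<bullet> ((- \<sigma>) *\<^sub>R P + s *\<^sub>R X) = s * x - \<sigma> * p"
      by (simp add: inner_add_right inner_diff_right x_def p_def inner_commute[of Z X] inner_commute[of Z P])
    ultimately show "0 \<le> Z \<bullet> ((- \<sigma>) *\<^sub>R P + s *\<^sub>R X)" by simp
  qed
  then have "\<forall>b\<in>U. 0 \<le> b \<bullet> ((- \<sigma>) *\<^sub>R P + s *\<^sub>R X)" by blast
  then show ?thesis using n by (simp add: pol_def s_def)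
qed

lemma gram_lemma:
  fixes X Y Q :: "'b::real_inner"
  assumes X: "norm X = 1" and Y: "norm Y = 1" and Q: "norm Q = 1"
    and s: "X \<bullet> Y = \<sigma>" "0 \<le> \<sigma>" "\<sigma> < 1"
    and a: "0 \<le> Q \<bullet> X" and b: "0 \<le> Q \<bullet> Y"
  shows "Q \<bullet> X - \<sigma> * (Q \<bullet> Y) \<ge> - \<sigma> * sqrt (1 - \<sigma>^2)"
proof -
  define a where "a = Q \<bullet> X"
  define b where "b = Q \<bullet> Y"
  define s where "s = sqrt (1 - \<sigma>^2)"
  have s2: "s^2 = 1 - \<sigma>^2" "0 \<le> s" using s by (simp_all add: s_def power_le_one)
  have XX: "X \<bullet> X = 1" and YY: "Y \<bullet> Y = 1" and QQ: "Q \<bullet> Q = 1"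
    using X Y Q by (simp_all add: norm_eq_1)
  have cs: "(a - \<sigma> * b)^2 \<le> s^2 * (1 - b^2)"
  proof -
    define Q' where "Q' = Q - b *\<^sub>R Y"
    define X' where "X' = X - \<sigma> *\<^sub>R Y"
    have YX: "Y \<bullet> X = \<sigma>" using s(1) by (simp add: inner_commute)
    have YQ: "Y \<bullet> Q = b" by (simp add: b_def inner_commute)
    have XQ: "X \<bullet> Q = a" by (simp add: a_def inner_commute)
    have e1: "Q' \<bullet> X' = a - \<sigma> * b"
      by (simp add: Q'_def X'_def inner_diff_left inner_diff_right a_def[symmetric] b_def[symmetric] s(1) YX YY YQ algebra_simps)
    have e2: "Q' \<bullet> Q' = 1 - b^2"
      by (simp add: Q'_def inner_diff_left inner_diff_right QQ YY YQ b_def[symmetric] power2_eq_square algebra_simps)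
    have ss: "s * s = 1 - \<sigma> * \<sigma>" using s2(1) by (simp add: power2_eq_square)
    have e3: "X' \<bullet> X' = s^2"
      by (simp add: X'_def inner_diff_left inner_diff_right XX YY YX s(1) ss power2_eq_square algebra_simps)
    have "(Q' \<bullet> X')^2 \<le> (Q' \<bullet> Q') * (X' \<bullet> X')"
      using Cauchy_Schwarz_ineq[of Q' X'] by simp
    then show ?thesis using e1 e2 e3 by (simp add: mult.commute)
  qed
  have "\<sigma> * b - a \<le> \<sigma> * s"
  proof (rule ccontr)
    assume "\<not> \<sigma> * b - a \<le> \<sigma> * s"
    then have gt: "\<sigma> * s < \<sigma> * b - a" by simp
    have a0: "0 \<le> a" using assms(7) by (simp add: a_def)
    have sp: "0 < \<sigma>"
    proof (rule ccontr)
      assume "\<not> 0 < \<sigma>" then have "\<sigma> = 0" using s by simp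
      then show False using gt a0 by simp
    qed
    have "\<sigma> * s < \<sigma> * b" using gt a0 by simp
    then have bs: "s < b" using sp by simp
    have "(\<sigma> * s)^2 < (\<sigma> * b - a)^2" using gt s2 sp by (intro power_strict_mono) auto
    moreover have "s^2 < b^2" using bs s2 by (intro power_strict_mono) auto
    then have "s^2 * (1 - b^2) \<le> s^2 * \<sigma>^2" using s2 by (intro mult_left_mono) (auto simp: algebra_simps)
    ultimately show False using cs by (simp add: power_mult_distrib mult.commute power2_commute)
  qed
  then show ?thesis by (simp add: a_def b_def s_def)
qed


lemma inner_normalize_right: "z \<bullet> (v /\<^sub>R norm v) = (z \<bullet> v) / norm v"
  by (simp add: divide_inverse mult.commute)

lemma FO:
  fixes x z k :: "'b::euclidean_space"
  assumes x: "x \<in> pol B" and max: "\<forall>k\<in>pol B. z \<bullet> k \<le> z \<bullet> x" and a0: "0 \<le> z \<bullet> x"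
    and k: "k \<in> pol B"
  shows "z \<bullet> k \<le> (z \<bullet> x) * (x \<bullet> k)"
proof (rule ccontr)
  define a where "a = z \<bullet> x"
  define c where "c = x \<bullet> k"
  define e where "e = z \<bullet> k"
  assume "\<not> z \<bullet> k \<le> (z \<bullet> x) * (x \<bullet> k)"
  then have ea: "a * c < e" by (simp add: a_def c_def e_def)
  have nx: "norm x = 1" and nk: "norm k = 1" using x k by (auto simp: pol_def)
  have xx: "x \<bullet> x = 1" and kk: "k \<bullet> k = 1" using nx nk by (simp_all add: norm_eq_1)
  have kx: "k \<bullet> x = c" by (simp add: c_def inner_commute)
  have c1: "\<bar>c\<bar> \<le> 1" using unit_inner_le[OF nx nk] by (simp add: c_def)
  have a0': "0 \<le> a" using a0 by (simp add: a_def)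
  have ac0: "0 \<le> a * (1 - c)" using a0' c1 by simp
  define t where "t = min (1/4) ((e - a*c) / (2*(a*(1-c)+1)))"
  have t0: "0 < t" using ea ac0 by (simp add: t_def)
  have t4: "t \<le> 1/4" unfolding t_def by (rule min.cobounded1)
  have tb: "t * (2*(a*(1-c)+1)) \<le> e - a*c"
  proof -
    have "t \<le> (e - a*c) / (2*(a*(1-c)+1))" by (simp add: t_def)
    then show ?thesis using ac0 by (simp add: le_divide_eq)
  qed
  define u where "u = t*(1-t)*(1-c)"
  have u0: "0 \<le> u" using t0 t4 c1 by (simp add: u_def)
  have u1: "2*u < 1"
  proof -
    have "0 < t*t" using t0 by simp
    then have tt: "t*(1-t) < 1/4" using t4 by (simp add: algebra_simps)
    have "0 \<le> t*(1-t)" using t0 t4 by simp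
    then have "t*(1-t)*(1-c) \<le> t*(1-t)*2" using c1 by (intro mult_left_mono) auto
    then show ?thesis using tt by (simp add: u_def)
  qed
  define v where "v = (1-t) *\<^sub>R x + t *\<^sub>R k"
  have vv: "v \<bullet> v = 1 - 2*u"
    by (simp add: v_def u_def inner_add_left inner_add_right xx kk kx c_def[symmetric] algebra_simps power2_eq_square)
  have v0: "v \<noteq> 0" using vv u1 by auto
  have nv: "norm v \<le> 1 - u"
  proof -
    have "norm v = sqrt (1 - 2*u)" using vv by (simp add: norm_eq_sqrt_inner)
    also have "\<dots> \<le> 1 - u" using u1 by (intro real_le_lsqrt) (auto simp: power2_eq_square algebra_simps)
    finally show ?thesis .
  qed
  have npos: "0 < norm v" using v0 by simp
  have "\<forall>b\<in>B. 0 \<le> b \<bullet> v"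
  proof
    fix b assume b: "b \<in> B"
    have "0 \<le> b \<bullet> x" "0 \<le> b \<bullet> k" using b x k by (auto simp: pol_def)
    then show "0 \<le> b \<bullet> v" using t0 t4 by (simp add: v_def inner_add_right)
  qed
  then have "v /\<^sub>R norm v \<in> pol B" by (rule pol_cone[OF v0])
  then have "z \<bullet> (v /\<^sub>R norm v) \<le> a" using max unfolding a_def by blast
  then have "(z \<bullet> v) / norm v \<le> a" by (simp only: inner_normalize_right)
  then have "z \<bullet> v \<le> a * norm v" using npos by (simp add: divide_le_eq mult.commute)
  also have "\<dots> \<le> a * (1 - u)" using nv a0' by (intro mult_left_mono) auto
  finally have "(1-t) * a + t * e \<le> a * (1 - u)"
    by (simp add: v_def inner_add_right a_def e_def)
  then have "t * e \<le> t * (a*c + a*t*(1-c))" by (simp add: u_def algebra_simps)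
  then have "e \<le> a*c + a*t*(1-c)" using t0 by simp
  moreover have "a*t*(1-c) \<le> (e - a*c)/2"
  proof -
    have "a*t*(1-c) \<le> t*(a*(1-c)+1)" using t0 by (simp add: algebra_simps)
    then show ?thesis using tb by (simp add: algebra_simps)
  qed
  ultimately have "e \<le> a*c + (e - a*c)/2" by linarith
  then show False using ea by (simp add: field_simps)
qed


lemma mi_lipschitz:
  fixes B :: "'b::euclidean_space set"
  assumes "compact B" "B \<noteq> {}" "B \<subseteq> sphere 0 1"
  shows "\<bar>mi B X - mi B X'\<bar> \<le> norm (X - X')"
proof -
  have h: "mi B X \<le> mi B X' + norm (X - X')" for X X'
  proof -
    obtain Y where Y: "Y \<in> B" "mi B X' = X' \<bullet> Y" using mi_attained(1)[OF assms(1,2)] by blast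
    have "mi B X \<le> X \<bullet> Y" using mi_attained(2)[OF assms(1,2) Y(1)] .
    also have "X \<bullet> Y = X' \<bullet> Y + (X - X') \<bullet> Y" by (simp add: inner_diff_left)
    also have "(X - X') \<bullet> Y \<le> norm (X - X')"
      using norm_cauchy_schwarz[of "X - X'" Y] Y(1) assms(3) by auto
    finally show ?thesis using Y by simp
  qed
  show ?thesis using h[of X X'] h[of X' X] by (simp add: norm_minus_commute abs_le_iff)
qed

lemma mi_continuous:
  fixes B :: "'b::euclidean_space set"
  assumes "compact B" "B \<noteq> {}" "B \<subseteq> sphere 0 1"
  shows "continuous_on U (mi B)"
proof (rule lipschitz_on_continuous_on)
  show "1-lipschitz_on U (mi B)"
    unfolding lipschitz_on_def using mi_lipschitz[OF assms] by (simp add: dist_norm dist_real_def)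
qed

context cw begin

lemma miK: "mi K X \<le> X \<bullet> Z" if "Z \<in> K" for X Z
  using mi_attained(2)[OF Kcpt Kne that] .
lemma miK_att: "\<exists>Y\<in>K. mi K X = X \<bullet> Y"
  using mi_attained(1)[OF Kcpt Kne] .
lemma miL: "mi L X \<le> X \<bullet> Z" if "Z \<in> L" for X Z
  using mi_attained(2)[OF Lcpt Lne that] .
lemma miL_att: "\<exists>Y\<in>L. mi L X = X \<bullet> Y"
  using mi_attained(1)[OF Lcpt Lne] .

lemma bdL_notN: assumes "P \<in> bdL" shows "P \<noteq> N"
proof
  assume PN: "P = N"
  obtain X where "X \<in> K" "P \<bullet> X = 0" using assms by (auto simp: bdL_def)
  then show False using Kpos[of X] PN by simp
qed

end

locale cwk = cw +
  fixes \<kappa> :: real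
  assumes hyp: "\<And>P. P \<in> bdL \<Longrightarrow> mi L P = \<kappa>"
begin

lemma hypP: assumes "P \<in> bdL" shows "\<forall>Q\<in>L. \<kappa> \<le> P \<bullet> Q" "\<exists>Q\<in>L. P \<bullet> Q = \<kappa>"
  using hyp[OF assms] miL miL_att by metis+

lemma kappa_range: "-1 \<le> \<kappa>" "\<kappa> < 1"
proof -
  obtain P where P: "P \<in> bdL" using bdL_ne by blast
  have PL: "P \<in> L" using P by (simp add: bdL_def)
  obtain Q where Q: "Q \<in> L" "P \<bullet> Q = \<kappa>" using hypP(2)[OF P] by blast
  show "-1 \<le> \<kappa>" using unit_inner_le[OF unitL[OF PL] unitL[OF Q(1)]] Q by simp
  show "\<kappa> < 1"
  proof (rule ccontr)
    assume "\<not> \<kappa> < 1"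
    then have "1 \<le> P \<bullet> N" using hypP(1)[OF P] NL by auto
    moreover have "P \<bullet> N \<le> 1" using unit_inner_le[OF unitL[OF PL] N] by simp
    ultimately have "P = N" using unit_inner_eq1[OF unitL[OF PL] N] by simp
    then show False using bdL_notN[OF P] by simp
  qed
qed

lemma C1: "md L = \<kappa>"
proof (rule antisym)
  obtain P0 where P0: "P0 \<in> bdL" using bdL_ne by blast
  obtain Q0 where Q0: "Q0 \<in> L" "P0 \<bullet> Q0 = \<kappa>" using hypP(2)[OF P0] by blast
  show "md L \<le> \<kappa>" using md_attained(2)[OF Lcpt Lne, of P0 Q0] P0 Q0 by (simp add: bdL_def)
next
  obtain P Q where PQ: "P \<in> L" "Q \<in> L" "md L = P \<bullet> Q" using md_attained(1)[OF Lcpt Lne] by blast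
  show "\<kappa> \<le> md L"
  proof (cases "P \<in> bdL")
    case True then show ?thesis using hypP(1)[OF True] PQ by simp
  next
    case False
    then have int: "\<forall>X\<in>K. 0 < P \<bullet> X" using PQ(1) KL_inner by (force simp: bdL_def)
    show ?thesis
    proof (cases "Q = P")
      case True
      then have "md L = 1" using PQ unitL[OF PQ(1)] by (simp add: norm_eq_1)
      then show ?thesis using kappa_range by simp
    next
      case False
      have "Q \<noteq> - P" using negL[OF PQ(1)] PQ(2) by auto
      then obtain P' where "P' \<in> L" "P' \<bullet> Q < P \<bullet> Q" using PL[OF PQ(1) int unitL[OF PQ(2)] False] by blast
      then show ?thesis using md_attained(2)[OF Lcpt Lne, of P' Q] PQ by simp
    qed
  qed
qed

lemma md_L_le: "P \<in> L \<Longrightarrow> Q \<in> L \<Longrightarrow> \<kappa> \<le> P \<bullet> Q"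
  using md_attained(2)[OF Lcpt Lne] C1 by metis

lemma C2: assumes X: "X \<in> bdK" shows "mi K X \<le> - \<kappa>"
proof -
  obtain P where P: "P \<in> L" "X \<bullet> P = 0" and XK: "X \<in> K" using X by (auto simp: bdK_def)
  have PX: "P \<bullet> X = 0" using P(2) by (simp add: inner_commute)
  have PbdL: "P \<in> bdL" using P XK PX by (auto simp: bdL_def)
  have nX: "norm X = 1" and nP: "norm P = 1" using unitK[OF XK] unitL[OF P(1)] .
  obtain Y where Y: "Y \<in> K" "mi K X = X \<bullet> Y" using miK_att by blast
  define \<sigma> where "\<sigma> = mi K X"
  have s1: "\<bar>\<sigma>\<bar> \<le> 1" using unit_inner_le[OF nX unitK[OF Y(1)]] Y by (simp add: \<sigma>_def)
  show ?thesis
  proof (cases "0 \<le> \<sigma>")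
    case True
    have "\<forall>Z\<in>K. \<sigma> \<le> X \<bullet> Z \<and> 0 \<le> P \<bullet> Z" using miK KL_inner P(1) by (auto simp: \<sigma>_def)
    then have Q': "(- \<sigma>) *\<^sub>R P + sqrt (1 - \<sigma>^2) *\<^sub>R X \<in> L"
      using cap_lemma[OF nX nP P(2) True _ Ksph] s1 by auto
    have "\<kappa> \<le> P \<bullet> ((- \<sigma>) *\<^sub>R P + sqrt (1 - \<sigma>^2) *\<^sub>R X)" using hypP(1)[OF PbdL] Q' by blast
    also have "\<dots> = - \<sigma>" using nP PX by (simp add: inner_add_right inner_diff_right norm_eq_1)
    finally show ?thesis by (simp add: \<sigma>_def)
  next
    case False
    show ?thesis
    proof (cases "\<kappa> \<le> 0")
      case True then show ?thesis using False by (simp add: \<sigma>_def)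
    next
      case False
      have "\<forall>Q\<in>L. \<kappa> \<le> P \<bullet> Q \<and> 0 \<le> X \<bullet> Q" using hypP(1)[OF PbdL] KL_inner XK by auto
      then have "(- \<kappa>) *\<^sub>R X + sqrt (1 - \<kappa>^2) *\<^sub>R P \<in> pol L"
        using cap_lemma[OF nP nX PX _ _ Lsph] False kappa_range by auto
      then have Z': "(- \<kappa>) *\<^sub>R X + sqrt (1 - \<kappa>^2) *\<^sub>R P \<in> K" using KpolL by simp
      have "mi K X \<le> X \<bullet> ((- \<kappa>) *\<^sub>R X + sqrt (1 - \<kappa>^2) *\<^sub>R P)" using miK[OF Z'] .
      also have "\<dots> = - \<kappa>" using nX P(2) by (simp add: inner_add_right inner_diff_right norm_eq_1)
      finally show ?thesis .
    qed
  qed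
qed

lemma bdK_ne: "bdK \<noteq> {}"
proof -
  obtain P where P: "P \<in> bdL" using bdL_ne by blast
  then obtain X where "X \<in> K" "P \<bullet> X = 0" "P \<in> L" by (auto simp: bdL_def)
  then have "X \<in> bdK" by (auto simp: bdK_def inner_commute)
  then show ?thesis by blast
qed

lemma LsubK: assumes "0 \<le> \<kappa>" shows "L \<subseteq> K"
proof
  fix P assume P: "P \<in> L"
  show "P \<in> K"
  proof (rule ccontr)
    assume "P \<notin> K"
    then have "P \<notin> pol L" using KpolL by simp
    then obtain Q where "Q \<in> L" "Q \<bullet> P < 0" using P Lsph by (auto simp: pol_def not_le)
    then show False using md_L_le[of Q P] P assms by simp
  qed
qed

end

context cwk begin

lemma no_mid:
  assumes k: "\<kappa> < 0" and X1: "X1 \<in> K" and m0: "0 \<le> mi K X1" and m1: "mi K X1 < - \<kappa>"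
  shows False
proof -
  obtain Y where Y: "Y \<in> K" "mi K X1 = X1 \<bullet> Y" using miK_att by blast
  define \<sigma> where "\<sigma> = mi K X1"
  have s0: "0 \<le> \<sigma>" and s1: "\<sigma> < 1" using m0 m1 kappa_range by (auto simp: \<sigma>_def)
  have nX: "norm X1 = 1" and nY: "norm Y = 1" using unitK X1 Y(1) by auto
  have XY: "X1 \<bullet> Y = \<sigma>" using Y by (simp add: \<sigma>_def)
  have YX: "Y \<bullet> X1 = \<sigma>" using XY by (simp add: inner_commute)
  have XX: "X1 \<bullet> X1 = 1" and YY: "Y \<bullet> Y = 1" using nX nY by (simp_all add: norm_eq_1)
  define w where "w = X1 - \<sigma> *\<^sub>R Y"
  have ww: "w \<bullet> w = 1 - \<sigma>^2"
    by (simp add: w_def inner_diff_left inner_diff_right XX YY XY YX power2_eq_square algebra_simps)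
  have s2: "0 < 1 - \<sigma>^2" using s0 s1 by (simp add: power_less_one_iff abs_square_less_1)
  have nw: "norm w = sqrt (1 - \<sigma>^2)" using ww by (simp add: norm_eq_sqrt_inner)
  have nwp: "0 < norm w" using nw s2 by simp
  have w0: "w \<noteq> 0" using nwp by auto
  have "\<forall>Z\<in>K. 0 \<le> Z \<bullet> w"
  proof
    fix Z assume Z: "Z \<in> K"
    have "\<sigma> \<le> X1 \<bullet> Z" using miK[OF Z] by (simp add: \<sigma>_def)
    moreover have "Z \<bullet> Y \<le> 1" using unit_inner_le[OF unitK[OF Z] nY] by simp
    then have "\<sigma> * (Z \<bullet> Y) \<le> \<sigma>" using s0 by (simp add: mult_left_le)
    ultimately show "0 \<le> Z \<bullet> w" by (simp add: w_def inner_diff_right inner_commute[of Z X1])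
  qed
  then have PL': "w /\<^sub>R norm w \<in> L" by (rule pol_cone[OF w0])
  have "(w /\<^sub>R norm w) \<bullet> Y = 0" using XY YY by (simp add: w_def inner_diff_left)
  then have "w /\<^sub>R norm w \<in> bdL" using PL' Y(1) by (auto simp: bdL_def)
  then obtain Q where Q: "Q \<in> L" "(w /\<^sub>R norm w) \<bullet> Q = \<kappa>" using hypP(2) by blast
  have "Q \<bullet> X1 - \<sigma> * (Q \<bullet> Y) \<ge> - \<sigma> * sqrt (1 - \<sigma>^2)"
    using gram_lemma[OF nX nY unitL[OF Q(1)] XY s0 s1] KL_inner[OF X1 Q(1)] KL_inner[OF Y(1) Q(1)] by simp
  moreover have "w \<bullet> Q = Q \<bullet> X1 - \<sigma> * (Q \<bullet> Y)" by (simp add: w_def inner_diff_left inner_commute[of X1 Q] inner_commute[of Y Q])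
  ultimately have "w \<bullet> Q \<ge> - \<sigma> * norm w" using nw by simp
  then have "(w \<bullet> Q) / norm w \<ge> - \<sigma>" using nwp by (simp add: le_divide_eq)
  moreover have "(w \<bullet> Q) / norm w = \<kappa>" using Q(2) normalize_inner by metis
  ultimately have "\<kappa> \<ge> - \<sigma>" by simp
  then show False using m1 by (simp add: \<sigma>_def)
qed

lemma easy:
  assumes k: "\<kappa> < 0" and X0: "X0 \<in> K" and Z0: "Z0 \<in> K"
  shows "- \<kappa> \<le> X0 \<bullet> Z0"
proof (rule ccontr)
  assume "\<not> - \<kappa> \<le> X0 \<bullet> Z0"
  then have mX0: "mi K X0 < - \<kappa>" using miK[OF Z0, of X0] by simp
  obtain YN where YN: "YN \<in> K" "mi K N = N \<bullet> YN" using miK_att by blast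
  have mN: "0 < mi K N" using Kpos[OF YN(1)] YN by simp
  show False
  proof (cases "mi K N < - \<kappa>")
    case True then show False using no_mid[OF k NK] mN by simp
  next
    case False
    define v where "v = (\<lambda>t::real. (1 - t) *\<^sub>R N + t *\<^sub>R X0)"
    define g where "g = (\<lambda>t. v t /\<^sub>R norm (v t))"
    have NX0: "0 < N \<bullet> X0" using Kpos[OF X0] .
    have vpos: "0 < N \<bullet> v t" if "0 \<le> t" "t \<le> 1" for t
    proof -
      have "N \<bullet> v t = (1 - t) + t * (N \<bullet> X0)" using N by (simp add: v_def inner_add_right norm_eq_1)
      moreover have "0 \<le> t * (N \<bullet> X0)" using that NX0 by simp
      ultimately show ?thesis using that NX0
        by (cases "t < 1") (simp_all add: add_pos_nonneg)
    qed
    have v0: "v t \<noteq> 0" if "0 \<le> t" "t \<le> 1" for t using vpos[OF that] by auto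
    have gK: "g t \<in> K" if "0 \<le> t" "t \<le> 1" for t
    proof -
      have "\<forall>Q\<in>L. 0 \<le> Q \<bullet> v t"
      proof
        fix Q assume Q: "Q \<in> L"
        have "0 \<le> Q \<bullet> N" "0 \<le> Q \<bullet> X0" using KL_inner[OF NK Q] KL_inner[OF X0 Q] by auto
        then show "0 \<le> Q \<bullet> v t" using that by (simp add: v_def inner_add_right)
      qed
      then have "g t \<in> pol L" unfolding g_def by (rule pol_cone[OF v0[OF that]])
      then show ?thesis using KpolL by simp
    qed
    have cg: "continuous_on {0..1} g"
      unfolding g_def v_def using v0[unfolded v_def]
      by (intro continuous_intros) auto
    have cf: "continuous_on {0..1} (mi K \<circ> g)"
      by (rule continuous_on_compose[OF cg mi_continuous[OF Kcpt Kne Ksph]])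
    have g0: "g 0 = N" using N by (simp add: g_def v_def)
    have g1: "g 1 = X0" using unitK[OF X0] by (simp add: g_def v_def)
    define y where "y = max (mi K X0) 0"
    have "(mi K \<circ> g) 1 \<le> y" "y \<le> (mi K \<circ> g) 0" using g0 g1 False mN mX0 k
      by (auto simp: y_def)
    then obtain t where t: "0 \<le> t" "t \<le> 1" "(mi K \<circ> g) t = y"
      using IVT2'[of "mi K \<circ> g" 1 y 0] cf by auto
    have "0 \<le> mi K (g t)" "mi K (g t) < - \<kappa>" using t mX0 k by (auto simp: y_def)
    then show False using no_mid[OF k gK[OF t(1,2)]] by simp
  qed
qed

end

context cwk begin

lemma bdL_I: "P \<in> L \<Longrightarrow> X \<in> K \<Longrightarrow> P \<bullet> X = 0 \<Longrightarrow> P \<in> bdL"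
  unfolding bdL_def by blast

lemma nearest_setup:
  assumes z: "z \<in> K" "z \<notin> L"
  obtains x W where "x \<in> L" "W \<noteq> 0" "\<forall>k\<in>L. 0 \<le> W \<bullet> k" "W \<bullet> x = 0"
    "z = (z \<bullet> x) *\<^sub>R x - W" "0 \<le> z \<bullet> x" "W /\<^sub>R norm W \<in> K"
proof -
  have "continuous_on L (\<lambda>k. z \<bullet> k)" by (intro continuous_intros)
  then obtain x where x: "x \<in> L" "\<forall>k\<in>L. z \<bullet> k \<le> z \<bullet> x"
    using continuous_attains_sup[OF Lcpt Lne] by blast
  define a where "a = z \<bullet> x"
  have a0: "0 \<le> a" using KL_inner[OF z(1) x(1)] by (simp add: a_def)
  have fo: "\<forall>k\<in>L. z \<bullet> k \<le> a * (x \<bullet> k)"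
    using FO[of x K z] x a0 by (auto simp: a_def)
  define W where "W = a *\<^sub>R x - z"
  have xx: "x \<bullet> x = 1" using unitL[OF x(1)] by (simp add: norm_eq_1)
  have Wk: "\<forall>k\<in>L. 0 \<le> W \<bullet> k" using fo by (simp add: W_def inner_diff_left)
  have Wx: "W \<bullet> x = 0" using xx by (simp add: W_def inner_diff_left a_def)
  have zeq: "z = a *\<^sub>R x - W" by (simp add: W_def)
  have W0: "W \<noteq> 0"
  proof
    assume "W = 0"
    then have zx: "z = a *\<^sub>R x" by (simp add: W_def)
    then have "\<bar>a\<bar> = 1" using unitK[OF z(1)] unitL[OF x(1)] by simp
    then have "z = x" using zx a0 by simp
    then show False using z x by simp
  qed
  have "\<forall>b\<in>L. 0 \<le> b \<bullet> W" using Wk inner_commute[of W] by metis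
  then have "W /\<^sub>R norm W \<in> pol L" using pol_cone[OF W0] by blast
  then have "W /\<^sub>R norm W \<in> K" using KpolL by simp
  moreover have "z = (z \<bullet> x) *\<^sub>R x - W" using zeq unfolding a_def .
  moreover have "0 \<le> z \<bullet> x" using a0 unfolding a_def .
  ultimately show ?thesis using that[OF x(1) W0 Wk Wx] by blast
qed

lemma zero_case:
  assumes k0: "\<kappa> = 0" and z: "z \<in> K"
  shows "z \<in> L"
proof (rule ccontr)
  assume zL: "z \<notin> L"
  obtain x W where x: "x \<in> L" and W0: "W \<noteq> 0" and Wk: "\<forall>k\<in>L. 0 \<le> W \<bullet> k" and Wx: "W \<bullet> x = 0"
    and zeq: "z = (z \<bullet> x) *\<^sub>R x - W" and VK: "W /\<^sub>R norm W \<in> K"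
    using nearest_setup[OF z zL] by metis
  have LK: "L \<subseteq> K" using LsubK k0 by simp
  have key: "q \<bullet> W = 0" if q: "q \<in> L" "q \<bullet> x = 0" for q
  proof -
    have "0 \<le> q \<bullet> z" using KL_inner[OF z q(1)] by simp
    also have "q \<bullet> z = q \<bullet> ((z \<bullet> x) *\<^sub>R x - W)"
      using zeq by (rule arg_cong[of _ _ "\<lambda>v. q \<bullet> v"])
    also have "\<dots> = (z \<bullet> x) * (q \<bullet> x) - q \<bullet> W" by (simp add: inner_diff_right)
    finally have "q \<bullet> W \<le> 0" using q(2) by simp
    moreover have "0 \<le> q \<bullet> W" using Wk q(1) inner_commute[of q W] by metis
    ultimately show ?thesis by simp
  qed
  have grow: "\<exists>F. finite F \<and> card F = Suc n \<and> F \<subseteq> L \<and> x \<in> F \<and> (\<forall>p\<in>F. p \<bullet> W = 0)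
              \<and> (\<forall>p\<in>F. \<forall>q\<in>F. p \<noteq> q \<longrightarrow> p \<bullet> q = 0)" for n
  proof (induction n)
    case 0
    show ?case using x Wx inner_commute[of x W] by (intro exI[of _ "{x}"]) simp
  next
    case (Suc n)
    then obtain F where F: "finite F" "card F = Suc n" "F \<subseteq> L" "x \<in> F" "\<forall>p\<in>F. p \<bullet> W = 0"
      "\<forall>p\<in>F. \<forall>q\<in>F. p \<noteq> q \<longrightarrow> p \<bullet> q = 0" by blast
    define u where "u = (\<Sum>p\<in>F. p)"
    have s1: "(\<Sum>q\<in>F. p \<bullet> q) = 1" if p: "p \<in> F" for p
    proof -
      have "(\<Sum>q\<in>F. p \<bullet> q) = (\<Sum>q\<in>F. if q = p then 1 else 0)"
      proof (rule sum.cong)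
        fix q assume q: "q \<in> F"
        show "p \<bullet> q = (if q = p then 1 else 0)"
        proof (cases "q = p")
          case True
          have "p \<in> L" using F(3) p by blast
          then have "p \<bullet> p = 1" using unitL[of p] by (simp add: norm_eq_1)
          then show ?thesis using True by simp
        next
          case False then show ?thesis using F(6) p q by simp
        qed
      qed simp
      also have "\<dots> = 1" using F(1) p by simp
      finally show ?thesis .
    qed
    have s1': "(\<Sum>q\<in>F. q \<bullet> p) = 1" if p: "p \<in> F" for p
      using s1[OF p] by (simp add: inner_commute)
    have "u \<bullet> u = (\<Sum>p\<in>F. \<Sum>q\<in>F. q \<bullet> p)" by (simp add: u_def inner_sum_left inner_sum_right)
    also have "\<dots> = (\<Sum>p\<in>F. 1)" by (rule sum.cong) (simp_all add: s1')
    finally have uu: "u \<bullet> u = real (card F)" by simp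
    then have u0: "u \<noteq> 0" using F(2) by auto
    have "\<forall>b\<in>K. 0 \<le> b \<bullet> u"
    proof
      fix b assume b: "b \<in> K"
      have "b \<bullet> u = (\<Sum>p\<in>F. b \<bullet> p)" by (simp add: u_def inner_sum_right)
      also have "0 \<le> \<dots>"
      proof (rule sum_nonneg)
        fix p assume "p \<in> F"
        then have "p \<in> L" using F(3) by blast
        then show "0 \<le> b \<bullet> p" using KL_inner[OF b] by blast
      qed
      finally show "0 \<le> b \<bullet> u" .
    qed
    then have pL: "u /\<^sub>R norm u \<in> L" by (rule pol_cone[OF u0])
    have uW: "u \<bullet> W = 0" using F(5) by (simp add: u_def inner_sum_left)
    have "(u /\<^sub>R norm u) \<bullet> (W /\<^sub>R norm W) = 0" using uW by simp
    then have "u /\<^sub>R norm u \<in> bdL" by (rule bdL_I[OF pL VK])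
    then obtain q where q: "q \<in> L" "(u /\<^sub>R norm u) \<bullet> q = 0" using hypP(2) k0 by blast
    have uq: "u \<bullet> q = 0" using q(2) u0 by simp
    have qK: "q \<in> K" using q(1) LK by blast
    have nonneg: "\<forall>p\<in>F. 0 \<le> p \<bullet> q"
    proof
      fix p assume "p \<in> F"
      then have "p \<in> L" using F(3) by blast
      then show "0 \<le> p \<bullet> q" using KL_inner[OF qK] by blast
    qed
    have "(\<Sum>p\<in>F. p \<bullet> q) = 0" using uq by (simp add: u_def inner_sum_left)
    then have pq: "\<forall>p\<in>F. p \<bullet> q = 0"
      using sum_nonneg_eq_0_iff[OF F(1), of "\<lambda>p. p \<bullet> q"] nonneg by simp
    have qF: "q \<notin> F"
    proof
      assume "q \<in> F"
      then have "q \<bullet> q = 0" using pq by blast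
      then show False using unitL[OF q(1)] by (simp add: norm_eq_1)
    qed
    have "x \<bullet> q = 0" using pq F(4) by blast
    then have qx: "q \<bullet> x = 0" by (simp only: inner_commute)
    have qW: "q \<bullet> W = 0" using key[OF q(1) qx] .
    show ?case
    proof (intro exI[of _ "insert q F"] conjI)
      show "finite (insert q F)" using F(1) by simp
      show "card (insert q F) = Suc (Suc n)" using F(1,2) qF by simp
      show "insert q F \<subseteq> L" using F(3) q(1) by simp
      show "x \<in> insert q F" using F(4) by simp
      show "\<forall>p\<in>insert q F. p \<bullet> W = 0" using F(5) qW by simp
      show "\<forall>p\<in>insert q F. \<forall>r\<in>insert q F. p \<noteq> r \<longrightarrow> p \<bullet> r = 0"
      proof (intro ballI impI)
        fix p r assume p: "p \<in> insert q F" and r: "r \<in> insert q F" and pr: "p \<noteq> r"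
        show "p \<bullet> r = 0"
        proof (cases "p = q")
          case True
          then have "r \<in> F" using r pr by auto
          then show ?thesis using pq True inner_commute[of r q] by simp
        next
          case False
          then have pF: "p \<in> F" using p by auto
          show ?thesis
          proof (cases "r = q")
            case True then show ?thesis using pq pF by simp
          next
            case False then have "r \<in> F" using r by auto
            then show ?thesis using F(6) pF pr by blast
          qed
        qed
      qed
    qed
  qed
  obtain F where F: "finite F" "card F = Suc DIM('a)" "F \<subseteq> L"
    "\<forall>p\<in>F. \<forall>q\<in>F. p \<noteq> q \<longrightarrow> p \<bullet> q = 0" using grow[of "DIM('a)"] by blast
  have "pairwise orthogonal F" using F(4) by (auto simp: pairwise_def orthogonal_def)
  moreover have "0 \<notin> F" using F(3) Lsph by auto
  ultimately have ind: "independent F" by (rule pairwise_orthogonal_independent)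
  have "card F \<le> DIM('a)" using independent_bound[OF ind] by simp
  then show False using F(2) by simp
qed

end

context cwk begin

lemma nearest_setup2:
  assumes z: "norm z = 1" "z \<notin> L" and ex: "\<exists>k\<in>L. 0 \<le> z \<bullet> k"
  obtains x W where "x \<in> L" "W \<noteq> 0" "\<forall>k\<in>L. 0 \<le> W \<bullet> k" "W \<bullet> x = 0"
    "z = (z \<bullet> x) *\<^sub>R x - W" "0 \<le> z \<bullet> x" "W /\<^sub>R norm W \<in> K" "\<forall>k\<in>L. z \<bullet> k \<le> z \<bullet> x"
proof -
  have "continuous_on L (\<lambda>k. z \<bullet> k)" by (intro continuous_intros)
  then obtain x where x: "x \<in> L" "\<forall>k\<in>L. z \<bullet> k \<le> z \<bullet> x"
    using continuous_attains_sup[OF Lcpt Lne] by blast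
  define a where "a = z \<bullet> x"
  have a0: "0 \<le> a" using ex x by (force simp: a_def)
  have fo: "\<forall>k\<in>L. z \<bullet> k \<le> a * (x \<bullet> k)"
    using FO[of x K z] x a0 by (auto simp: a_def)
  define W where "W = a *\<^sub>R x - z"
  have xx: "x \<bullet> x = 1" using unitL[OF x(1)] by (simp add: norm_eq_1)
  have Wk: "\<forall>k\<in>L. 0 \<le> W \<bullet> k" using fo by (simp add: W_def inner_diff_left)
  have Wx: "W \<bullet> x = 0" using xx by (simp add: W_def inner_diff_left a_def)
  have zeq: "z = a *\<^sub>R x - W" by (simp add: W_def)
  have W0: "W \<noteq> 0"
  proof
    assume "W = 0"
    then have zx: "z = a *\<^sub>R x" by (simp add: W_def)
    then have "\<bar>a\<bar> = 1" using z(1) unitL[OF x(1)] by simp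
    then have "z = x" using zx a0 by simp
    then show False using z x by simp
  qed
  have "\<forall>b\<in>L. 0 \<le> b \<bullet> W" using Wk inner_commute[of W] by metis
  then have "W /\<^sub>R norm W \<in> pol L" using pol_cone[OF W0] by blast
  then have VK: "W /\<^sub>R norm W \<in> K" using KpolL by simp
  have "z = (z \<bullet> x) *\<^sub>R x - W" using zeq unfolding a_def .
  moreover have "0 \<le> z \<bullet> x" using a0 unfolding a_def .
  ultimately show ?thesis using that[OF x(1) W0 Wk Wx _ _ VK] x(2) by blast
qed

lemma H3:
  assumes k: "0 < \<kappa>" and v0: "v \<noteq> 0" and h: "\<forall>y\<in>L. \<kappa> * norm v \<le> v \<bullet> y"
  shows "v /\<^sub>R norm v \<in> L"
proof (rule ccontr)
  define z where "z = v /\<^sub>R norm v"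
  assume zL: "\<not> v /\<^sub>R norm v \<in> L"
  have nz: "norm z = 1" using v0 by (simp add: z_def)
  have nvp: "0 < norm v" using v0 by simp
  have hz: "\<forall>y\<in>L. \<kappa> \<le> z \<bullet> y"
  proof
    fix y assume "y \<in> L"
    then have "\<kappa> * norm v \<le> v \<bullet> y" using h by blast
    then have "\<kappa> \<le> (v \<bullet> y) / norm v" using nvp by (simp add: le_divide_eq)
    then show "\<kappa> \<le> z \<bullet> y" unfolding z_def normalize_inner .
  qed
  have "\<kappa> \<le> z \<bullet> N" using hz NL by blast
  then have ex: "\<exists>k\<in>L. 0 \<le> z \<bullet> k" using NL k by (intro bexI[of _ N]) auto
  obtain x W where x: "x \<in> L" and W0: "W \<noteq> 0" and Wk: "\<forall>k\<in>L. 0 \<le> W \<bullet> k" and Wx: "W \<bullet> x = 0"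
    and zeq: "z = (z \<bullet> x) *\<^sub>R x - W" and VK: "W /\<^sub>R norm W \<in> K"
    and fo0: "\<forall>k\<in>L. z \<bullet> k \<le> z \<bullet> x"
    using nearest_setup2[OF nz zL[folded z_def] ex] by metis
  define a where "a = z \<bullet> x"
  have fo: "\<forall>k\<in>L. z \<bullet> k \<le> a * (x \<bullet> k)"
    using FO[of x K z] x fo0 hz k by (force simp: a_def)
  have "(W /\<^sub>R norm W) \<bullet> x = 0" using Wx by simp
  then have "x \<bullet> (W /\<^sub>R norm W) = 0" by (simp only: inner_commute)
  then have xb: "x \<in> bdL" by (rule bdL_I[OF x VK])
  obtain y where y: "y \<in> L" "x \<bullet> y = \<kappa>" using hypP(2)[OF xb] by blast
  have "a \<le> 1" using unit_inner_le[OF nz unitL[OF x]] by (simp add: a_def)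
  moreover have "a \<noteq> 1"
  proof
    assume "a = 1"
    then have "z = x" using unit_inner_eq1[OF nz unitL[OF x]] by (simp add: a_def)
    then show False using zL x z_def by simp
  qed
  ultimately have a1: "a < 1" by simp
  have "z \<bullet> y \<le> a * (x \<bullet> y)" using fo y(1) by blast
  then have "z \<bullet> y \<le> a * \<kappa>" using y(2) by simp
  also have "\<dots> < \<kappa>" using a1 k by simp
  finally show False using hz y(1) by force
qed

end

lemma soc_convex: "convex {v::'b::real_inner. \<beta> * norm v \<le> k \<bullet> v}" if "0 \<le> \<beta>"
proof (rule convexI)
  fix u v :: 'b and t1 t2 :: real
  assume u: "u \<in> {v. \<beta> * norm v \<le> k \<bullet> v}" and v: "v \<in> {v. \<beta> * norm v \<le> k \<bullet> v}"
    and t: "0 \<le> t1" "0 \<le> t2" "t1 + t2 = 1"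
  have "\<beta> * norm (t1 *\<^sub>R u + t2 *\<^sub>R v) \<le> \<beta> * (t1 * norm u + t2 * norm v)"
    using norm_triangle_ineq[of "t1 *\<^sub>R u" "t2 *\<^sub>R v"] t that by (intro mult_left_mono) auto
  also have "\<dots> = t1 * (\<beta> * norm u) + t2 * (\<beta> * norm v)" by (simp add: algebra_simps)
  also have "\<dots> \<le> t1 * (k \<bullet> u) + t2 * (k \<bullet> v)"
    using u v t by (intro add_mono mult_left_mono) auto
  also have "\<dots> = k \<bullet> (t1 *\<^sub>R u + t2 *\<^sub>R v)" by (simp add: inner_add_right)
  finally show "t1 *\<^sub>R u + t2 *\<^sub>R v \<in> {v. \<beta> * norm v \<le> k \<bullet> v}" by simp
qed

lemma soc_closed: "closed {v::'b::euclidean_space. \<beta> * norm v \<le> k \<bullet> v}"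
  by (intro closed_Collect_le continuous_intros)

context cwk begin

lemma H4:
  assumes k: "0 < \<kappa>" and x: "x \<in> L" and V: "V \<in> K" "V \<bullet> x = 0" and k0: "k0 \<in> L"
  shows "(\<kappa> / sqrt (1 - \<kappa>^2)) * (1 - k0 \<bullet> x) \<le> k0 \<bullet> V"
proof (rule ccontr)
  define s where "s = sqrt (1 - \<kappa>^2)"
  have k1: "\<kappa> < 1" using kappa_range by simp
  have s2: "0 < 1 - \<kappa>^2" using k k1 by (simp add: power_less_one_iff abs_square_less_1)
  have sp: "0 < s" using s2 by (simp add: s_def)
  have ss: "s * s = 1 - \<kappa> * \<kappa>" using s2 by (simp add: s_def power2_eq_square)
  define \<beta>0 where "\<beta>0 = (\<kappa> / s) * (1 - k0 \<bullet> x)"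
  have nx: "norm x = 1" and nV: "norm V = 1" and nk0: "norm k0 = 1"
    using unitL[OF x] unitK[OF V(1)] unitL[OF k0] by auto
  have xx: "x \<bullet> x = 1" using nx by (simp add: norm_eq_1)
  have xV: "x \<bullet> V = 0" using V(2) by (simp add: inner_commute)
  have b0: "0 \<le> \<beta>0"
  proof -
    have "k0 \<bullet> x \<le> 1" using unit_inner_le[OF nk0 nx] by simp
    then show ?thesis using k sp by (simp add: \<beta>0_def)
  qed
  define SOC where "SOC = {v::'a. \<beta>0 * norm v \<le> k0 \<bullet> v}"
  assume "\<not> (\<kappa> / sqrt (1 - \<kappa>^2)) * (1 - k0 \<bullet> x) \<le> k0 \<bullet> V"
  then have "V \<notin> SOC" using nV by (simp add: SOC_def \<beta>0_def s_def)
  then obtain E b where Eb: "E \<bullet> V < b" "\<forall>u\<in>SOC. b < E \<bullet> u"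
    using separating_hyperplane_closed_point[OF soc_convex[OF b0] soc_closed] unfolding SOC_def by blast
  have "0 \<in> SOC" by (simp add: SOC_def)
  then have "b < E \<bullet> 0" using Eb(2) by blast
  then have b_neg: "b < 0" by simp
  have Epos: "0 \<le> E \<bullet> u" if u: "u \<in> SOC" for u
  proof (rule ccontr)
    assume "\<not> 0 \<le> E \<bullet> u"
    then have neg: "E \<bullet> u < 0" by simp
    define l where "l = b / (E \<bullet> u)"
    have lp: "0 < l" using neg b_neg by (simp add: l_def divide_neg_neg)
    have "l *\<^sub>R u \<in> SOC"
    proof -
      have "\<beta>0 * norm u \<le> k0 \<bullet> u" using u by (simp add: SOC_def)
      then have "l * (\<beta>0 * norm u) \<le> l * (k0 \<bullet> u)" using lp by simp
      then show ?thesis using lp by (simp add: SOC_def algebra_simps)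
    qed
    then have "b < E \<bullet> (l *\<^sub>R u)" using Eb(2) by blast
    moreover have "E \<bullet> (l *\<^sub>R u) = b" using neg by (simp add: l_def)
    ultimately show False by simp
  qed
  define A where "A = {y \<in> L. x \<bullet> y = \<kappa>}"
  have gSOC: "y - \<kappa> *\<^sub>R x \<in> SOC" if y: "y \<in> A" for y
  proof -
    have yL: "y \<in> L" and xy: "x \<bullet> y = \<kappa>" using y by (auto simp: A_def)
    have yy: "y \<bullet> y = 1" using unitL[OF yL] by (simp add: norm_eq_1)
    have yx: "y \<bullet> x = \<kappa>" using xy by (simp add: inner_commute)
    have "(y - \<kappa> *\<^sub>R x) \<bullet> (y - \<kappa> *\<^sub>R x) = s * s"
      by (simp add: inner_diff_left inner_diff_right yy xx xy yx ss algebra_simps)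
    then have ng: "norm (y - \<kappa> *\<^sub>R x) = s" using sp by (simp add: norm_eq_sqrt_inner)
    have "\<kappa> \<le> k0 \<bullet> y" using md_L_le[OF k0 yL] .
    then have "\<kappa> * (1 - k0 \<bullet> x) \<le> k0 \<bullet> (y - \<kappa> *\<^sub>R x)" by (simp add: inner_diff_right algebra_simps)
    moreover have "\<beta>0 * s = \<kappa> * (1 - k0 \<bullet> x)" using sp by (simp add: \<beta>0_def)
    ultimately show ?thesis using ng by (simp add: SOC_def)
  qed
  have Ng: "0 < N \<bullet> (y - \<kappa> *\<^sub>R x)" if y: "y \<in> A" for y
  proof -
    have yL: "y \<in> L" and xy: "x \<bullet> y = \<kappa>" using y by (auto simp: A_def)
    have yy: "y \<bullet> y = 1" using unitL[OF yL] by (simp add: norm_eq_1)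
    have yx: "y \<bullet> x = \<kappa>" using xy by (simp add: inner_commute)
    have g0: "y - \<kappa> *\<^sub>R x \<noteq> 0"
    proof
      assume "y - \<kappa> *\<^sub>R x = 0"
      then have "y \<bullet> (y - \<kappa> *\<^sub>R x) = 0" by simp
      then have "1 - \<kappa> * \<kappa> = 0" by (simp add: inner_diff_right yy yx)
      then show False using s2 by (simp add: power2_eq_square)
    qed
    have "\<forall>q\<in>L. 0 \<le> q \<bullet> (y - \<kappa> *\<^sub>R x)"
    proof
      fix q assume q: "q \<in> L"
      have "\<kappa> \<le> q \<bullet> y" using md_L_le[OF q yL] .
      moreover have "q \<bullet> x \<le> 1" using unit_inner_le[OF unitL[OF q] nx] by simp
      then have "\<kappa> * (q \<bullet> x) \<le> \<kappa>" using k by (simp add: mult_left_le)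
      ultimately show "0 \<le> q \<bullet> (y - \<kappa> *\<^sub>R x)" by (simp add: inner_diff_right)
    qed
    then have "(y - \<kappa> *\<^sub>R x) /\<^sub>R norm (y - \<kappa> *\<^sub>R x) \<in> pol L" by (rule pol_cone[OF g0])
    then have "(y - \<kappa> *\<^sub>R x) /\<^sub>R norm (y - \<kappa> *\<^sub>R x) \<in> K" using KpolL by simp
    then have "0 < N \<bullet> ((y - \<kappa> *\<^sub>R x) /\<^sub>R norm (y - \<kappa> *\<^sub>R x))" by (rule Kpos)
    then have h: "0 < (N \<bullet> (y - \<kappa> *\<^sub>R x)) / norm (y - \<kappa> *\<^sub>R x)" by (simp only: inner_normalize_right)
    have "0 < N \<bullet> (y - \<kappa> *\<^sub>R x) \<and> 0 < norm (y - \<kappa> *\<^sub>R x) \<or> N \<bullet> (y - \<kappa> *\<^sub>R x) < 0 \<and> norm (y - \<kappa> *\<^sub>R x) < 0"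
      by (rule iffD1[OF zero_less_divide_iff h])
    then show ?thesis by auto
  qed
  define \<eta> where "\<eta> = - (E \<bullet> V) / (2 * (\<bar>N \<bullet> V\<bar> + 1))"
  have EV: "E \<bullet> V < 0" using Eb(1) b_neg by simp
  have "0 < 2 * (\<bar>N \<bullet> V\<bar> + 1)" by simp
  then have eta: "0 < \<eta>" unfolding \<eta>_def using EV by (intro divide_pos_pos) auto
  define E2 where "E2 = E - (E \<bullet> x) *\<^sub>R x + \<eta> *\<^sub>R (N - (N \<bullet> x) *\<^sub>R x)"
  have E2x: "E2 \<bullet> x = 0" by (simp add: E2_def inner_diff_left inner_add_left xx)
  have E2V: "E2 \<bullet> V < 0"
  proof -
    have e: "E2 \<bullet> V = E \<bullet> V + \<eta> * (N \<bullet> V)" by (simp add: E2_def inner_diff_left inner_add_left xV)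
    have "\<eta> * (N \<bullet> V) \<le> \<eta> * \<bar>N \<bullet> V\<bar>" using eta by (intro mult_left_mono) auto
    also have "\<eta> * \<bar>N \<bullet> V\<bar> \<le> - (E \<bullet> V) / 2"
    proof -
      have "\<eta> * \<bar>N \<bullet> V\<bar> = (- (E \<bullet> V) / 2) * (\<bar>N \<bullet> V\<bar> / (\<bar>N \<bullet> V\<bar> + 1))"
        by (simp add: \<eta>_def field_simps)
      also have "\<dots> \<le> (- (E \<bullet> V) / 2) * 1"
        using EV by (intro mult_left_mono) auto
      finally show ?thesis by simp
    qed
    finally show ?thesis using e EV by simp
  qed
  have E2A: "0 < E2 \<bullet> y" if y: "y \<in> A" for y
  proof -
    have xy: "x \<bullet> y = \<kappa>" using y by (simp add: A_def)
    have "E2 \<bullet> y = E \<bullet> (y - \<kappa> *\<^sub>R x) + \<eta> * (N \<bullet> (y - \<kappa> *\<^sub>R x))"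
      by (simp add: E2_def inner_diff_left inner_add_left inner_diff_right xy algebra_simps)
    moreover have "0 \<le> E \<bullet> (y - \<kappa> *\<^sub>R x)" using Epos[OF gSOC[OF y]] .
    moreover have "0 < \<eta> * (N \<bullet> (y - \<kappa> *\<^sub>R x))" using eta Ng[OF y] by simp
    ultimately show ?thesis by simp
  qed
  have Acpt: "compact A"
  proof -
    have "A = L \<inter> {y. x \<bullet> y = \<kappa>}" by (auto simp: A_def)
    moreover have "closed {y. x \<bullet> y = \<kappa>}" by (intro closed_Collect_eq continuous_intros)
    ultimately show ?thesis using Lcpt by (simp add: compact_Int_closed)
  qed
  have xb: "x \<in> bdL" by (rule bdL_I[OF x V(1) xV])
  have Ane: "A \<noteq> {}" using hypP(2)[OF xb] by (auto simp: A_def)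
  have "continuous_on A (\<lambda>y. E2 \<bullet> y)" by (intro continuous_intros)
  then obtain y0 where y0: "y0 \<in> A" "\<forall>y\<in>A. E2 \<bullet> y0 \<le> E2 \<bullet> y"
    using continuous_attains_inf[OF Acpt Ane] by blast
  define m where "m = E2 \<bullet> y0"
  have mp: "0 < m" using E2A[OF y0(1)] by (simp add: m_def)
  have mA: "\<forall>y\<in>A. m \<le> E2 \<bullet> y" using y0 by (simp add: m_def)
  define L' where "L' = {k \<in> L. E2 \<bullet> k \<le> m/2}"
  have L'gt: "\<kappa> < x \<bullet> k" if kk: "k \<in> L'" for k
  proof -
    have kL: "k \<in> L" and ek: "E2 \<bullet> k \<le> m/2" using kk by (auto simp: L'_def)
    have "\<kappa> \<le> x \<bullet> k" using md_L_le[OF x kL] .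
    moreover have "x \<bullet> k \<noteq> \<kappa>"
    proof
      assume "x \<bullet> k = \<kappa>"
      then have "k \<in> A" using kL by (simp add: A_def)
      then show False using mA ek mp by force
    qed
    ultimately show ?thesis by simp
  qed
  obtain \<beta> where bp: "0 < \<beta>" and bL': "\<forall>k\<in>L'. \<beta> \<le> x \<bullet> k - \<kappa>"
  proof (cases "L' = {}")
    case True then show ?thesis using that[of 1] by simp
  next
    case False
    have L'cpt: "compact L'"
    proof -
      have "L' = L \<inter> {k. E2 \<bullet> k \<le> m/2}" by (auto simp: L'_def)
      moreover have "closed {k. E2 \<bullet> k \<le> m/2}" by (intro closed_Collect_le continuous_intros)
      ultimately show ?thesis using Lcpt by (simp add: compact_Int_closed)
    qed
    have "continuous_on L' (\<lambda>k. x \<bullet> k - \<kappa>)" by (intro continuous_intros)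
    then obtain k1 where k1: "k1 \<in> L'" "\<forall>k\<in>L'. x \<bullet> k1 - \<kappa> \<le> x \<bullet> k - \<kappa>"
      using continuous_attains_inf[OF L'cpt False] by blast
    show ?thesis using that[of "x \<bullet> k1 - \<kappa>"] k1 L'gt[OF k1(1)] by simp
  qed
  define c where "c = E2 \<bullet> E2"
  have c0: "0 \<le> c" by (simp add: c_def)
  define t where "t = min 1 (min (\<beta> / (2 * (norm E2 + 1))) (min (\<beta> / (\<kappa> * c + 1)) (m / (\<kappa> * c + 1))))"
  have kc: "0 \<le> \<kappa> * c" using k c0 by simp
  have nE2: "0 \<le> norm E2" by simp
  have d0: "0 < norm E2 + 1" using nE2 by linarith
  have d1: "0 < 2 * (norm E2 + 1)" using d0 by simp
  have p1: "0 < \<beta> / (2 * (norm E2 + 1))" by (rule divide_pos_pos[OF bp d1])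
  have p2: "0 < \<beta> / (\<kappa> * c + 1)" using bp kc by (intro divide_pos_pos) auto
  have p3: "0 < m / (\<kappa> * c + 1)" using mp kc by (intro divide_pos_pos) auto
  have t0: "0 < t" unfolding t_def using p1 p2 p3 by simp
  have t1: "t \<le> 1" by (simp add: t_def)
  have tE: "t * norm E2 \<le> \<beta> / 2"
  proof -
    have "t \<le> \<beta> / (2 * (norm E2 + 1))" by (simp add: t_def)
    then have "t * (2 * (norm E2 + 1)) \<le> \<beta>" using pos_le_divide_eq[OF d1] by blast
    then show ?thesis using t0 by (simp add: algebra_simps)
  qed
  have tkc: "t * (\<kappa> * c) \<le> \<beta>"
  proof -
    have "t \<le> \<beta> / (\<kappa> * c + 1)" by (simp add: t_def)
    moreover have "0 < \<kappa> * c + 1" using kc by linarith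
    ultimately have "t * (\<kappa> * c + 1) \<le> \<beta>" using pos_le_divide_eq by blast
    then show ?thesis using t0 by (simp add: algebra_simps)
  qed
  have tkm: "t * (\<kappa> * c) \<le> m"
  proof -
    have "t \<le> m / (\<kappa> * c + 1)" by (simp add: t_def)
    moreover have "0 < \<kappa> * c + 1" using kc by linarith
    ultimately have "t * (\<kappa> * c + 1) \<le> m" using pos_le_divide_eq by blast
    then show ?thesis using t0 by (simp add: algebra_simps)
  qed
  have tt: "\<kappa> * t^2 * c \<le> t * (\<kappa> * c)"
  proof -
    have "t * t \<le> t" using t0 t1 by (simp add: mult_le_cancel_left1)
    then have "(t * t) * (\<kappa> * c) \<le> t * (\<kappa> * c)" using kc by (intro mult_right_mono) auto
    then show ?thesis by (simp add: power2_eq_square algebra_simps)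
  qed
  define w where "w = x + t *\<^sub>R E2"
  have ww: "w \<bullet> w = 1 + t^2 * c"
    by (simp add: w_def inner_add_left inner_add_right xx E2x inner_commute[of x E2] c_def power2_eq_square)
  have nw: "norm w \<le> 1 + t^2 * c / 2"
    using sqrt_bound[of "t^2 * c"] c0 ww by (simp add: norm_eq_sqrt_inner)
  have "0 \<le> t^2 * c" using c0 by simp
  then have "w \<bullet> w \<noteq> 0" using ww by linarith
  then have w0: "w \<noteq> 0" by auto
  have main: "\<forall>y\<in>L. \<kappa> * norm w \<le> w \<bullet> y"
  proof
    fix y assume yL: "y \<in> L"
    have "\<kappa> * norm w \<le> \<kappa> * (1 + t^2 * c / 2)" using nw k by (intro mult_left_mono) auto
    also have "\<dots> = \<kappa> + \<kappa> * t^2 * c / 2" by (simp add: algebra_simps)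
    finally have l1: "\<kappa> * norm w \<le> \<kappa> + \<kappa> * t^2 * c / 2" .
    have wy: "w \<bullet> y = x \<bullet> y + t * (E2 \<bullet> y)" by (simp add: w_def inner_add_left)
    show "\<kappa> * norm w \<le> w \<bullet> y"
    proof (cases "y \<in> L'")
      case True
      have "\<beta> \<le> x \<bullet> y - \<kappa>" using bL' True by blast
      moreover have "- norm E2 \<le> E2 \<bullet> y"
        using norm_cauchy_schwarz[of "-E2" y] unitL[OF yL] by simp
      then have "t * (- norm E2) \<le> t * (E2 \<bullet> y)" using t0 by (intro mult_left_mono) auto
      then have "- (t * norm E2) \<le> t * (E2 \<bullet> y)" by simp
      ultimately show ?thesis using l1 wy tE tkc tt by linarith
    next
      case False
      then have "m/2 < E2 \<bullet> y" using yL by (simp add: L'_def)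
      then have "t * (m/2) \<le> t * (E2 \<bullet> y)" using t0 by simp
      moreover have "\<kappa> \<le> x \<bullet> y" using md_L_le[OF x yL] .
      moreover have "\<kappa> * t^2 * c / 2 \<le> t * (m/2)"
      proof -
        have "\<kappa> * t^2 * c = t * (t * (\<kappa> * c))" by (simp add: power2_eq_square algebra_simps)
        also have "\<dots> \<le> t * m" using tkm t0 by (intro mult_left_mono) auto
        finally show ?thesis by simp
      qed
      ultimately show ?thesis using l1 wy by linarith
    qed
  qed
  have wL: "w /\<^sub>R norm w \<in> L" by (rule H3[OF k w0 main])
  have "0 \<le> (w /\<^sub>R norm w) \<bullet> V" using KL_inner[OF V(1) wL] by simp
  then have "0 \<le> (w \<bullet> V) / norm w" by (simp only: normalize_inner)
  then have "0 \<le> w \<bullet> V" using w0 by (simp add: zero_le_divide_iff)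
  moreover have "w \<bullet> V = t * (E2 \<bullet> V)" by (simp add: w_def inner_add_left xV)
  moreover have "t * (E2 \<bullet> V) < 0" using t0 E2V by (simp add: mult_pos_neg)
  ultimately show False by simp
qed

end

context cwk begin

lemma hard:
  assumes k: "0 < \<kappa>" and z: "z \<in> K" and Z: "Z \<in> K"
  shows "- \<kappa> \<le> z \<bullet> Z"
proof (cases "z \<in> L")
  case True
  then have "0 \<le> z \<bullet> Z" using KL_inner[OF Z True] by simp
  then show ?thesis using k by simp
next
  case False
  have nz: "norm z = 1" using unitK[OF z] .
  have "0 \<le> z \<bullet> N" using KL_inner[OF z NL] by simp
  then have ex: "\<exists>k\<in>L. 0 \<le> z \<bullet> k" using NL by blast
  obtain x W where x: "x \<in> L" and W0: "W \<noteq> 0" and Wx: "W \<bullet> x = 0"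
    and zeq: "z = (z \<bullet> x) *\<^sub>R x - W" and a0: "0 \<le> z \<bullet> x" and VK: "W /\<^sub>R norm W \<in> K"
    using nearest_setup2[OF nz False ex] by metis
  define a where "a = z \<bullet> x"
  have zeq': "z = a *\<^sub>R x - W" unfolding a_def by (rule zeq)
  define V where "V = W /\<^sub>R norm W"
  define s where "s = sqrt (1 - \<kappa>^2)"
  have k1: "\<kappa> < 1" using kappa_range by simp
  have s2: "0 < 1 - \<kappa>^2" using k k1 by (simp add: power_less_one_iff abs_square_less_1)
  have sp: "0 < s" using s2 by (simp add: s_def)
  have ss: "s * s = 1 - \<kappa> * \<kappa>" using s2 by (simp add: s_def power2_eq_square)
  have nx: "norm x = 1" using unitL[OF x] .
  have xx: "x \<bullet> x = 1" using nx by (simp add: norm_eq_1)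
  have nWp: "0 < norm W" using W0 by simp
  have VK': "V \<in> K" using VK by (simp add: V_def)
  have nV: "norm V = 1" using W0 by (simp add: V_def)
  have VV: "V \<bullet> V = 1" using nV by (simp add: norm_eq_1)
  have Vx: "V \<bullet> x = 0" using Wx by (simp add: V_def)
  have xV: "x \<bullet> V = 0" using Vx by (simp add: inner_commute)
  define Ys where "Ys = \<kappa> *\<^sub>R x + s *\<^sub>R V"
  have YY: "Ys \<bullet> Ys = 1"
    by (simp add: Ys_def inner_add_left inner_add_right xx VV xV Vx ss)
  then have nY: "norm Ys = 1" by (simp add: norm_eq_1)
  have Yk: "\<forall>y\<in>L. \<kappa> * norm Ys \<le> Ys \<bullet> y"
  proof
    fix y assume y: "y \<in> L"
    have "(\<kappa> / s) * (1 - y \<bullet> x) \<le> y \<bullet> V" using H4[OF k x VK' Vx y] by (simp add: s_def)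
    then have "s * ((\<kappa> / s) * (1 - y \<bullet> x)) \<le> s * (y \<bullet> V)" using sp by (intro mult_left_mono) auto
    then have "\<kappa> * (1 - y \<bullet> x) \<le> s * (y \<bullet> V)" using sp by simp
    moreover have "Ys \<bullet> y = \<kappa> * (x \<bullet> y) + s * (V \<bullet> y)" by (simp add: Ys_def inner_add_left)
    moreover have "x \<bullet> y = y \<bullet> x" "V \<bullet> y = y \<bullet> V" by (simp_all add: inner_commute)
    ultimately show "\<kappa> * norm Ys \<le> Ys \<bullet> y" using nY by (simp add: algebra_simps)
  qed
  have Y0: "Ys \<noteq> 0" using nY by auto
  have "Ys /\<^sub>R norm Ys \<in> L" by (rule H3[OF k Y0 Yk])
  then have YL: "Ys \<in> L" using nY by simp
  have "0 \<le> Ys \<bullet> z" using KL_inner[OF z YL] by simp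
  moreover have "Ys \<bullet> z = a * \<kappa> - s * norm W"
  proof -
    have xW: "x \<bullet> W = 0" using Wx by (simp add: inner_commute)
    have VW: "V \<bullet> W = norm W" using W0 by (simp add: V_def dot_square_norm power2_eq_square)
    have "Ys \<bullet> z = Ys \<bullet> (a *\<^sub>R x) - Ys \<bullet> W" using zeq' by (simp add: inner_diff_right)
    also have "\<dots> = a * \<kappa> - s * norm W"
    proof -
      have e1: "Ys \<bullet> (a *\<^sub>R x) = \<kappa> * a * (x \<bullet> x) + s * a * (V \<bullet> x)"
        by (simp add: Ys_def inner_add_left algebra_simps)
      have e2: "Ys \<bullet> W = \<kappa> * (x \<bullet> W) + s * (V \<bullet> W)"
        by (simp add: Ys_def inner_add_left)
      show ?thesis using e1 e2 xx Vx VW xW by simp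
    qed
    finally show ?thesis .
  qed
  ultimately have sW: "s * norm W \<le> a * \<kappa>" by simp
  have WW: "norm W ^ 2 = 1 - a^2"
  proof -
    have "1 = z \<bullet> z" using nz by (simp add: norm_eq_1)
    also have "z \<bullet> z = (a *\<^sub>R x - W) \<bullet> (a *\<^sub>R x - W)" using zeq' by simp
    also have "\<dots> = a^2 + W \<bullet> W"
      by (simp add: inner_diff_left inner_diff_right xx Wx inner_commute[of x W] power2_eq_square)
    finally show ?thesis by (simp add: power2_norm_eq_inner)
  qed
  have "(s * norm W)^2 \<le> (a * \<kappa>)^2"
    using sW sp nWp by (intro power_mono) auto
  moreover have "(s * norm W)^2 = (1 - \<kappa>^2) * (1 - a^2)"
  proof -
    have "s^2 = 1 - \<kappa>^2" using s2 by (simp add: s_def)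
    then show ?thesis using WW by (simp add: power_mult_distrib)
  qed
  ultimately have "(1 - \<kappa>^2) * (1 - a^2) \<le> a^2 * \<kappa>^2" by (simp add: power_mult_distrib)
  then have "norm W ^ 2 \<le> \<kappa>^2" using WW by (simp add: algebra_simps)
  moreover have "0 \<le> \<kappa>" using k by simp
  ultimately have nWk: "norm W \<le> \<kappa>" by (rule power2_le_imp_le)
  have "0 \<le> x \<bullet> Z" using KL_inner[OF Z x] by simp
  then have "0 \<le> a * (x \<bullet> Z)" using a0 by (simp add: a_def)
  moreover have "W \<bullet> Z \<le> norm W" using norm_cauchy_schwarz[of W Z] unitK[OF Z] by simp
  moreover have "z \<bullet> Z = a * (x \<bullet> Z) - W \<bullet> Z"
  proof -
    have "z \<bullet> Z = (a *\<^sub>R x - W) \<bullet> Z" using zeq' by simp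
    then show ?thesis by (simp add: inner_diff_left)
  qed
  ultimately show ?thesis using nWk by linarith
qed

lemma C3: assumes "X \<in> K" "Z \<in> K" shows "- \<kappa> \<le> X \<bullet> Z"
proof (cases "\<kappa> < 0")
  case True
  have "- \<kappa> \<le> X \<bullet> Z" using easy[OF True assms(1) assms(2)] by simp
  then show ?thesis .
next
  case False
  show ?thesis
  proof (cases "\<kappa> = 0")
    case True
    have "X \<in> L" using zero_case[OF True assms(1)] .
    then show ?thesis using KL_inner[OF assms(2)] True by simp
  next
    case False
    then show ?thesis using hard[OF _ assms] \<open>\<not> \<kappa> < 0\<close> by simp
  qed
qed

lemma mdK: "md K = - \<kappa>"
proof (rule antisym)
  obtain X where X: "X \<in> bdK" using bdK_ne by blast
  have XK: "X \<in> K" using X by (simp add: bdK_def)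
  obtain Y where Y: "Y \<in> K" "mi K X = X \<bullet> Y" using miK_att by blast
  show "md K \<le> - \<kappa>" using md_attained(2)[OF Kcpt Kne XK Y(1)] Y C2[OF X] by simp
  obtain P Q where "P \<in> K" "Q \<in> K" "md K = P \<bullet> Q" using md_attained(1)[OF Kcpt Kne] by blast
  then show "- \<kappa> \<le> md K" using C3 by simp
qed

lemma miK_bd: assumes "X \<in> bdK" shows "mi K X = - \<kappa>"
proof (rule antisym)
  show "mi K X \<le> - \<kappa>" by (rule C2[OF assms])
  obtain Y where Y: "Y \<in> K" "mi K X = X \<bullet> Y" using miK_att by blast
  have "X \<in> K" using assms by (simp add: bdK_def)
  then show "- \<kappa> \<le> mi K X" using C3 Y by simp
qed

end

lemma sph_polar_pol: "sph_polar W = pol W"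
  by (auto simp: sph_polar_def pol_def hemi_def)

lemma hemi_pol:
  fixes A :: "('a::euclidean_space \<times> real) set"
  assumes "A \<subseteq> sphere 0 1"
  shows "(Q \<in> sphere 0 1 \<and> A \<subseteq> hemi Q) \<longleftrightarrow> Q \<in> pol A"
  using assms by (auto simp: pol_def hemi_def inner_commute)

lemma supporting_iff:
  fixes A :: "('a::euclidean_space \<times> real) set"
  assumes cA: "closed A" and sA: "A \<subseteq> sphere 0 1"
  shows "supporting Q A \<longleftrightarrow> Q \<in> pol A \<and> (\<exists>P\<in>A. Q \<bullet> P = 0)"
proof
  assume "supporting Q A"
  then obtain P where P: "Q \<in> sphere 0 1" "P \<in> sph_boundary A" "A \<subseteq> hemi Q" "Q \<bullet> P = 0"
    by (auto simp: supporting_def supports_at_def)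
  have "P \<in> A" using P(2) cA closure_closed by (auto simp: sph_boundary_def)
  then show "Q \<in> pol A \<and> (\<exists>P\<in>A. Q \<bullet> P = 0)" using P hemi_pol[OF sA, of Q] by blast
next
  assume h: "Q \<in> pol A \<and> (\<exists>P\<in>A. Q \<bullet> P = 0)"
  then obtain P where P: "P \<in> A" "Q \<bullet> P = 0" and QA: "Q \<in> pol A" by blast
  have QS: "Q \<in> sphere 0 1" and hQ: "A \<subseteq> hemi Q" using hemi_pol[OF sA, of Q] QA by auto
  have nP: "norm P = 1" using P(1) sA by auto
  have nQ: "norm Q = 1" using QS by simp
  have QQ: "Q \<bullet> Q = 1" using nQ by (simp add: norm_eq_1)
  have "P \<in> closure (sphere 0 1 - A)"
  proof (rule closure_approachable[THEN iffD2], intro allI impI)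
    fix e :: real assume e: "0 < e"
    define t where "t = e / 4"
    define v where "v = P - t *\<^sub>R Q"
    have vQ: "v \<bullet> Q = - t" using P(2) QQ by (simp add: v_def inner_diff_left inner_commute[of P Q])
    have t0: "0 < t" using e by (simp add: t_def)
    have v0: "v \<noteq> 0" using vQ t0 by auto
    have y1: "v /\<^sub>R norm v \<in> sphere 0 1" using v0 by simp
    have "(v /\<^sub>R norm v) \<bullet> Q = (v \<bullet> Q) / norm v" by (rule normalize_inner)
    also have "\<dots> < 0" using vQ t0 v0 by (simp add: divide_neg_pos)
    finally have neg: "(v /\<^sub>R norm v) \<bullet> Q < 0" .
    have y2: "v /\<^sub>R norm v \<notin> A"
    proof
      assume "v /\<^sub>R norm v \<in> A"
      then have "v /\<^sub>R norm v \<in> hemi Q" using hQ by blast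
      then have "0 \<le> Q \<bullet> (v /\<^sub>R norm v)" by (simp add: hemi_def)
      then show False using neg by (simp add: inner_commute)
    qed
    have "dist (v /\<^sub>R norm v) P \<le> 2 * norm (v - P)"
      using norm_normalize_close[OF nP v0] by (simp add: dist_norm)
    also have "norm (v - P) = t" using nQ t0 by (simp add: v_def)
    finally have "dist (v /\<^sub>R norm v) P < e" using e by (simp add: t_def)
    then show "\<exists>y\<in>sphere 0 1 - A. dist y P < e" using y1 y2 by blast
  qed
  moreover have "P \<in> closure A" using P(1) closure_subset by blast
  ultimately have "P \<in> sph_boundary A" by (simp add: sph_boundary_def)
  then show "supporting Q A" unfolding supporting_def supports_at_def using QS hQ P(2) by blast
qed

lemma width_eq:
  fixes A :: "('a::euclidean_space \<times> real) set"
  assumes sA: "A \<subseteq> sphere 0 1" and cB: "compact (pol A)" and P: "norm P = 1"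
    and negP: "- P \<notin> pol A" and oth: "Q1 \<in> pol A" "Q1 \<noteq> P"
  shows "width P A = pi - arccos (mi (pol A) P)"
proof -
  define B where "B = pol A"
  have Bne: "B \<noteq> {}" using oth by (auto simp: B_def)
  have cB': "compact B" using cB by (simp add: B_def)
  obtain Q0 where Q0: "Q0 \<in> B" "mi B P = P \<bullet> Q0" using mi_attained(1)[OF cB' Bne] by blast
  have mle: "\<And>Q. Q \<in> B \<Longrightarrow> mi B P \<le> P \<bullet> Q" using mi_attained(2)[OF cB' Bne] by blast
  have Bs: "B \<subseteq> sphere 0 1" by (simp add: B_def pol_sphere)
  have T: "{Q \<in> sphere 0 1. Q \<noteq> P \<and> Q \<noteq> - P \<and> A \<subseteq> hemi Q} = B - {P}"
    using hemi_pol[OF sA] negP by (auto simp: B_def)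
  have Q0P: "Q0 \<noteq> P"
  proof
    assume "Q0 = P"
    then have "mi B P = 1" using Q0 P by (simp add: norm_eq_1)
    then have "1 \<le> P \<bullet> Q1" using mle[of Q1] oth by (simp add: B_def)
    moreover have "P \<bullet> Q1 \<le> 1" using unit_inner_le[OF P, of Q1] oth pol_sphere by (force)
    ultimately have "P = Q1" using unit_inner_eq1[OF P, of Q1] oth pol_sphere by force
    then show False using oth by simp
  qed
  have r: "-1 \<le> P \<bullet> Q \<and> P \<bullet> Q \<le> 1" if "Q \<in> B" for Q
    using unit_inner_le[OF P, of Q] that Bs by (auto simp: abs_le_iff)
  have "width P A = (INF Q\<in>B - {P}. pi - arccos (P \<bullet> Q))"
    unfolding width_def T lune_thickness_def sph_dist_def by simp
  also have "\<dots> = pi - arccos (P \<bullet> Q0)"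
  proof (rule cInf_eq_minimum)
    show "pi - arccos (P \<bullet> Q0) \<in> (\<lambda>Q. pi - arccos (P \<bullet> Q)) ` (B - {P})" using Q0 Q0P by blast
  next
    fix x assume "x \<in> (\<lambda>Q. pi - arccos (P \<bullet> Q)) ` (B - {P})"
    then obtain Q where Q: "Q \<in> B" "x = pi - arccos (P \<bullet> Q)" by blast
    have "arccos (P \<bullet> Q) \<le> arccos (P \<bullet> Q0)"
      using arccos_le_arccos[of "P \<bullet> Q0" "P \<bullet> Q"] r[OF Q(1)] r[OF Q0(1)] mle[OF Q(1)] Q0(2) by simp
    then show "pi - arccos (P \<bullet> Q0) \<le> x" using Q(2) by simp
  qed
  finally show ?thesis using Q0 by (simp add: B_def)
qed

lemma diam_eq:
  fixes B :: "('a::euclidean_space \<times> real) set"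
  assumes cB: "compact B" and Bne: "B \<noteq> {}" and Bs: "B \<subseteq> sphere 0 1"
  shows "sph_diam B = arccos (md B)"
proof -
  obtain P0 Q0 where PQ0: "P0 \<in> B" "Q0 \<in> B" "md B = P0 \<bullet> Q0" using md_attained(1)[OF cB Bne] by blast
  have mle: "\<And>P Q. P \<in> B \<Longrightarrow> Q \<in> B \<Longrightarrow> md B \<le> P \<bullet> Q" using md_attained(2)[OF cB Bne] by blast
  have r: "-1 \<le> P \<bullet> Q \<and> P \<bullet> Q \<le> 1" if "P \<in> B" "Q \<in> B" for P Q
  proof -
    have "norm P = 1" "norm Q = 1" using that Bs by auto
    then show ?thesis using unit_inner_le[of P Q] by (simp add: abs_le_iff)
  qed
  show ?thesis unfolding sph_diam_def sph_dist_def
  proof (rule cSup_eq_maximum)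
    show "arccos (md B) \<in> (\<lambda>PQ. arccos (fst PQ \<bullet> snd PQ)) ` (B \<times> B)"
      using PQ0 by (intro image_eqI[of _ _ "(P0, Q0)"]) auto
  next
    fix x assume "x \<in> (\<lambda>PQ. arccos (fst PQ \<bullet> snd PQ)) ` (B \<times> B)"
    then obtain P Q where PQ: "P \<in> B" "Q \<in> B" "x = arccos (P \<bullet> Q)" by auto
    show "x \<le> arccos (md B)"
      using arccos_le_arccos[of "md B" "P \<bullet> Q"] r[OF PQ(1,2)] r[OF PQ0(1,2)] mle[OF PQ(1,2)] PQ0(3) PQ(3)
      by simp
  qed
qed


lemma cone_sep:
  fixes C :: "'b::euclidean_space set"
  assumes cv: "convex C" and cl: "closed C" and z0: "0 \<in> C"
    and sc: "\<And>x l. x \<in> C \<Longrightarrow> 0 \<le> l \<Longrightarrow> l *\<^sub>R x \<in> C" and zC: "z \<notin> C"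
  obtains a where "a \<bullet> z < 0" "\<forall>x\<in>C. 0 \<le> a \<bullet> x"
proof -
  obtain a b where ab: "a \<bullet> z < b" "\<forall>x\<in>C. b < a \<bullet> x"
    using separating_hyperplane_closed_point[OF cv cl zC] by blast
  have bn: "b < 0" using ab(2) z0 by force
  have "\<forall>x\<in>C. 0 \<le> a \<bullet> x"
  proof (intro ballI, rule ccontr)
    fix x assume x: "x \<in> C" and "\<not> 0 \<le> a \<bullet> x"
    then have neg: "a \<bullet> x < 0" by simp
    define l where "l = b / (a \<bullet> x)"
    have lp: "0 \<le> l" using neg bn by (simp add: l_def divide_nonpos_neg less_imp_le)
    have "b < a \<bullet> (l *\<^sub>R x)" using ab(2) sc[OF x lp] by blast
    moreover have "a \<bullet> (l *\<^sub>R x) = b" using neg by (simp add: l_def)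
    ultimately show False by simp
  qed
  moreover have "a \<bullet> z < 0" using ab(1) bn by linarith
  ultimately show ?thesis using that by blast
qed

context
  fixes \<gamma> :: "'a::euclidean_space \<Rightarrow> real"
  assumes cont: "continuous_on (sphere 0 1) \<gamma>"
    and gpos: "\<And>\<theta>. \<theta> \<in> sphere 0 1 \<Longrightarrow> \<gamma> \<theta> > 0"
begin

definition "CC = {Z::'a \<times> real. \<forall>\<theta>\<in>sphere 0 1. fst Z \<bullet> \<theta> \<le> \<gamma> \<theta> * snd Z}"

lemma CC_snd_pos:
  assumes Z: "Z \<in> CC" "norm Z = 1"
  shows "0 < snd Z"
proof (rule ccontr)
  assume "\<not> 0 < snd Z"
  then have s0: "snd Z \<le> 0" by simp
  show False
  proof (cases "fst Z = 0")
    case False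
    define \<theta> where "\<theta> = fst Z /\<^sub>R norm (fst Z)"
    have th: "\<theta> \<in> sphere 0 1" using False by (simp add: \<theta>_def)
    have "fst Z \<bullet> \<theta> = norm (fst Z)" using False
      by (simp add: \<theta>_def dot_square_norm power2_eq_square)
    moreover have "fst Z \<bullet> \<theta> \<le> \<gamma> \<theta> * snd Z" using Z(1) th by (simp add: CC_def)
    moreover have "\<gamma> \<theta> * snd Z \<le> 0" using mult_nonneg_nonpos[of "\<gamma> \<theta>" "snd Z"] gpos[OF th] s0 by simp
    moreover have "0 < norm (fst Z)" using False by simp
    ultimately show False by linarith
  next
    case True
    obtain b :: 'a where b: "b \<in> Basis" using nonempty_Basis by blast
    have bs: "b \<in> sphere 0 1" using b by simp
    have "Z = (0, snd Z)" using True by (simp add: prod_eq_iff)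
    then have "norm (0::'a, snd Z) = 1" using Z(2) by simp
    then have "\<bar>snd Z\<bar> = 1" by (simp add: norm_Pair)
    then have sZ: "snd Z = -1" using s0 by simp
    have "fst Z \<bullet> b \<le> \<gamma> b * snd Z" using Z(1) bs by (simp add: CC_def)
    then show False using True sZ gpos[OF bs] by simp
  qed
qed

lemma wulff_char: "sph_wulff \<gamma> = CC \<inter> sphere 0 1"
proof (intro set_eqI iffI)
  fix Z :: "'a \<times> real"
  assume Z: "Z \<in> sph_wulff \<gamma>"
  then have ZS: "Z \<in> sphere 0 1" and sp: "0 < snd Z" and Zw: "alphaN Z \<in> Id_emb ` wulff \<gamma>"
    by (auto simp: sph_wulff_def upper_hemi_def)
  then obtain x where x: "x \<in> wulff \<gamma>" "alphaN Z = Id_emb x" by blast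
  have xeq: "x = (1 / snd Z) *\<^sub>R fst Z" using x(2) by (simp add: alphaN_def Id_emb_def)
  have "\<forall>\<theta>\<in>sphere 0 1. fst Z \<bullet> \<theta> \<le> \<gamma> \<theta> * snd Z"
  proof
    fix \<theta> :: 'a assume th: "\<theta> \<in> sphere 0 1"
    have "x \<bullet> \<theta> \<le> \<gamma> \<theta>" using x(1) th by (auto simp: wulff_def)
    then have "(fst Z \<bullet> \<theta>) / snd Z \<le> \<gamma> \<theta>" using xeq by simp
    then show "fst Z \<bullet> \<theta> \<le> \<gamma> \<theta> * snd Z" using sp by (simp add: divide_le_eq)
  qed
  then show "Z \<in> CC \<inter> sphere 0 1" using ZS by (simp add: CC_def)
next
  fix Z :: "'a \<times> real"
  assume Z: "Z \<in> CC \<inter> sphere 0 1"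
  then have sp: "0 < snd Z" using CC_snd_pos by auto
  define x where "x = (1 / snd Z) *\<^sub>R fst Z"
  have "x \<in> wulff \<gamma>"
  proof -
    have "\<forall>\<theta>\<in>sphere 0 1. x \<bullet> \<theta> \<le> \<gamma> \<theta>"
    proof
      fix \<theta> :: 'a assume th: "\<theta> \<in> sphere 0 1"
      have "fst Z \<bullet> \<theta> \<le> \<gamma> \<theta> * snd Z" using Z th by (simp add: CC_def)
      then have "(fst Z \<bullet> \<theta>) / snd Z \<le> \<gamma> \<theta>" using sp by (simp add: divide_le_eq)
      then show "x \<bullet> \<theta> \<le> \<gamma> \<theta>" by (simp add: x_def)
    qed
    then show ?thesis by (auto simp: wulff_def)
  qed
  moreover have "alphaN Z = Id_emb x" by (simp add: alphaN_def Id_emb_def x_def)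
  ultimately have "alphaN Z \<in> Id_emb ` wulff \<gamma>" by blast
  then show "Z \<in> sph_wulff \<gamma>" using Z sp by (simp add: sph_wulff_def upper_hemi_def)
qed

lemma CC_convex: "convex CC"
proof (rule convexI)
  fix u v :: "'a \<times> real" and s t :: real
  assume u: "u \<in> CC" and v: "v \<in> CC" and st: "0 \<le> s" "0 \<le> t" "s + t = 1"
  show "s *\<^sub>R u + t *\<^sub>R v \<in> CC" unfolding CC_def mem_Collect_eq
  proof (intro ballI)
    fix \<theta> :: 'a assume th: "\<theta> \<in> sphere 0 1"
    have "fst u \<bullet> \<theta> \<le> \<gamma> \<theta> * snd u" "fst v \<bullet> \<theta> \<le> \<gamma> \<theta> * snd v" using u v th by (auto simp: CC_def)
    then have "s * (fst u \<bullet> \<theta>) + t * (fst v \<bullet> \<theta>) \<le> s * (\<gamma> \<theta> * snd u) + t * (\<gamma> \<theta> * snd v)"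
      using st by (intro add_mono mult_left_mono) auto
    then show "fst (s *\<^sub>R u + t *\<^sub>R v) \<bullet> \<theta> \<le> \<gamma> \<theta> * snd (s *\<^sub>R u + t *\<^sub>R v)"
      by (simp add: inner_add_left algebra_simps)
  qed
qed

lemma CC_closed: "closed CC"
proof -
  have "CC = (\<Inter>\<theta>\<in>sphere 0 1. {Z. fst Z \<bullet> \<theta> \<le> \<gamma> \<theta> * snd Z})" by (auto simp: CC_def)
  moreover have "closed (\<Inter>\<theta>\<in>sphere 0 1. {Z::'a\<times>real. fst Z \<bullet> \<theta> \<le> \<gamma> \<theta> * snd Z})"
    by (intro closed_INT ballI closed_Collect_le continuous_intros)
  ultimately show ?thesis by simp
qed

lemma CC_scale: assumes x: "x \<in> CC" and l: "0 \<le> l" shows "l *\<^sub>R x \<in> CC"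
  unfolding CC_def mem_Collect_eq
proof (intro ballI)
  fix \<theta> :: 'a assume th: "\<theta> \<in> sphere 0 1"
  have "fst x \<bullet> \<theta> \<le> \<gamma> \<theta> * snd x" using x th by (simp add: CC_def)
  then have "l * (fst x \<bullet> \<theta>) \<le> l * (\<gamma> \<theta> * snd x)" using l by (rule mult_left_mono)
  then show "fst (l *\<^sub>R x) \<bullet> \<theta> \<le> \<gamma> \<theta> * snd (l *\<^sub>R x)" by (simp add: algebra_simps)
qed

lemma cw_wulff: "cw (sph_wulff \<gamma>) (0, 1) (SOME b. b \<in> (Basis::'a set), 0)"
proof -
  define K where "K = sph_wulff \<gamma>"
  define N where "N = ((0::'a), (1::real))"
  define b0 where "b0 = (SOME b. b \<in> (Basis::'a set))"
  have b0: "b0 \<in> Basis" unfolding b0_def using nonempty_Basis by (meson someI_ex ex_in_conv)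
  have Kc: "K = CC \<inter> sphere 0 1" using wulff_char by (simp add: K_def)
  have nN: "norm N = 1" by (simp add: N_def)
  have nE: "norm (b0, 0::real) = 1" using b0 by (simp add: norm_Pair)
  have EN: "(b0, 0::real) \<bullet> N = 0" by (simp add: N_def)
  have Ksph: "K \<subseteq> sphere 0 1" using Kc by simp
  have Kcpt: "compact K"
    unfolding Kc by (rule closed_Int_compact[OF CC_closed compact_sphere])
  have Kpos: "\<And>Z. Z \<in> K \<Longrightarrow> 0 < N \<bullet> Z"
    using CC_snd_pos Kc by (auto simp: N_def)
  have Knbh: "\<exists>e>0. \<forall>Z\<in>sphere 0 1. dist Z N < e \<longrightarrow> Z \<in> K"
  proof -
    obtain b :: 'a where b: "b \<in> Basis" using nonempty_Basis by blast
    have Sne: "sphere (0::'a) 1 \<noteq> {}" using b by force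
    obtain t0 where t0: "t0 \<in> sphere (0::'a) 1" "\<forall>t\<in>sphere 0 1. \<gamma> t0 \<le> \<gamma> t"
      using continuous_attains_inf[OF compact_sphere Sne cont] by blast
    define g where "g = \<gamma> t0"
    have gp: "0 < g" using gpos[OF t0(1)] by (simp add: g_def)
    define e where "e = min (1/2) (g/2)"
    have ep: "0 < e" using gp by (simp add: e_def)
    have "\<forall>Z\<in>sphere 0 1. dist Z N < e \<longrightarrow> Z \<in> K"
    proof (intro ballI impI)
      fix Z :: "'a \<times> real" assume ZS: "Z \<in> sphere 0 1" and d: "dist Z N < e"
      have dZ: "norm (Z - N) < e" using d by (simp add: dist_norm)
      have "Z - N = (fst Z, snd Z - 1)" by (simp add: N_def prod_eq_iff)
      then have f: "norm (fst Z) \<le> norm (Z - N)" and s: "norm (snd Z - 1) \<le> norm (Z - N)"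
        using norm_fst_le[of "fst Z" "snd Z - 1"] norm_snd_le[of "snd Z - 1" "fst Z"] by auto
      have "\<bar>snd Z - 1\<bar> < 1/2" using s dZ by (simp add: e_def)
      then have s2: "1/2 \<le> snd Z" unfolding abs_less_iff by linarith
      have "Z \<in> CC" unfolding CC_def mem_Collect_eq
      proof (intro ballI)
        fix \<theta> :: 'a assume th: "\<theta> \<in> sphere 0 1"
        have "fst Z \<bullet> \<theta> \<le> norm (fst Z)" using norm_cauchy_schwarz[of "fst Z" \<theta>] th by simp
        also have "\<dots> \<le> g/2" using f dZ by (simp add: e_def)
        also have "\<dots> \<le> \<gamma> \<theta> / 2" using t0(2) th by (simp add: g_def)
        also have "\<dots> \<le> \<gamma> \<theta> * snd Z" using s2 gpos[OF th] by (simp add: mult_left_mono)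
        finally show "fst Z \<bullet> \<theta> \<le> \<gamma> \<theta> * snd Z" .
      qed
      then show "Z \<in> K" using ZS Kc by simp
    qed
    then show ?thesis using ep by blast
  qed
  have bip: "pol (pol K) = K"
  proof (intro set_eqI iffI)
    fix Z assume Z: "Z \<in> K"
    then show "Z \<in> pol (pol K)" using Ksph by (auto simp: pol_def inner_commute)
  next
    fix Z assume Z: "Z \<in> pol (pol K)"
    have ZS: "Z \<in> sphere 0 1" using Z pol_sphere by blast
    show "Z \<in> K"
    proof (rule ccontr)
      assume "Z \<notin> K"
      then have "Z \<notin> CC" using ZS Kc by simp
      moreover have z0: "0 \<in> CC" by (simp add: CC_def)
      ultimately obtain a where a: "a \<bullet> Z < 0" "\<forall>x\<in>CC. 0 \<le> a \<bullet> x"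
        using cone_sep[OF CC_convex CC_closed z0 CC_scale] by blast
      have a0: "a \<noteq> 0" using a(1) by auto
      have "\<forall>b\<in>K. 0 \<le> b \<bullet> a" using a(2) Kc by (auto simp: inner_commute)
      then have "a /\<^sub>R norm a \<in> pol K" by (rule pol_cone[OF a0])
      moreover have "\<forall>b\<in>pol K. 0 \<le> b \<bullet> Z" using Z unfolding pol_def[of "pol K"] by blast
      ultimately have "0 \<le> (a /\<^sub>R norm a) \<bullet> Z" by blast
      then have "0 \<le> (a \<bullet> Z) / norm a" by (simp only: normalize_inner)
      moreover have "(a \<bullet> Z) / norm a < 0" using a(1) a0 by (simp add: divide_neg_pos)
      ultimately show False by linarith
    qed
  qed
  show ?thesis
    unfolding K_def[symmetric] N_def[symmetric] b0_def[symmetric]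
    by (unfold_locales) (use nN nE EN Ksph Kcpt Kpos Knbh bip in auto)
qed

end

theorem mainTheorem5:
  fixes \<gamma> :: "'a::euclidean_space \<Rightarrow> real"
  assumes "continuous_on (sphere 0 1) \<gamma>"
    and "\<And>\<theta>. \<theta> \<in> sphere 0 1 \<Longrightarrow> \<gamma> \<theta> > 0"
    and "constant_width (sph_wulff \<gamma>)"
  shows "Delta (sph_wulff \<gamma>) + sph_diam (sph_polar (sph_wulff \<gamma>)) = pi \<and>
         Delta (sph_wulff \<gamma>) + Delta (sph_polar (sph_wulff \<gamma>)) = pi \<and>
         sph_diam (sph_wulff \<gamma>) + Delta (sph_polar (sph_wulff \<gamma>)) = pi \<and>
         sph_diam (sph_wulff \<gamma>) + sph_diam (sph_polar (sph_wulff \<gamma>)) = pi"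
proof -
  define E0 where "E0 = ((SOME b. b \<in> (Basis::'a set)), (0::real))"
  have cwi: "cw (sph_wulff \<gamma>) ((0::'a), (1::real)) E0"
    unfolding E0_def by (rule cw_wulff[OF assms(1) assms(2)])
  interpret cw "sph_wulff \<gamma>" "((0::'a), (1::real))" E0 by (rule cwi)
  define K where "K = sph_wulff \<gamma>"
  have polK: "sph_polar (sph_wulff \<gamma>) = L" by (simp add: sph_polar_pol)
  have Kcl: "closed (sph_wulff \<gamma>)" using Kcpt by (rule compact_imp_closed)
  have Lcl: "closed L" using Lcpt by (rule compact_imp_closed)
  have suppK: "supporting P (sph_wulff \<gamma>) \<longleftrightarrow> P \<in> bdL" for P
    using supporting_iff[OF Kcl Ksph, of P] by (simp add: bdL_def)
  have widthK: "width P (sph_wulff \<gamma>) = pi - arccos (mi L P)" if P: "P \<in> bdL" for P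
  proof -
    have PL: "P \<in> L" using P by (simp add: bdL_def)
    show ?thesis
      using width_eq[OF Ksph Lcpt unitL[OF PL] negL[OF PL] NL] bdL_notN[OF P] by auto
  qed
  have mirange: "-1 \<le> mi B P \<and> mi B P \<le> 1" if h: "compact B" "B \<noteq> {}" "B \<subseteq> sphere 0 1" "norm P = 1"
    for B P
  proof -
    obtain Q where Q: "Q \<in> B" "mi B P = P \<bullet> Q" using mi_attained(1)[OF h(1,2)] by blast
    have "norm Q = 1" using Q(1) h(3) by auto
    then show ?thesis using unit_inner_le[OF h(4), of Q] Q(2) by (simp add: abs_le_iff)
  qed
  have ex: "\<exists>w. \<forall>P. supporting P (sph_wulff \<gamma>) \<longrightarrow> width P (sph_wulff \<gamma>) = w"
    using assms(3) by (simp add: constant_width_def)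
  have DK: "\<forall>P. supporting P (sph_wulff \<gamma>) \<longrightarrow> width P (sph_wulff \<gamma>) = Delta (sph_wulff \<gamma>)"
    unfolding Delta_def by (rule someI_ex[OF ex])
  obtain P0 where P0: "P0 \<in> bdL" using bdL_ne by blast
  define \<kappa> where "\<kappa> = mi L P0"
  have mrL: "-1 \<le> mi L P \<and> mi L P \<le> 1" if "P \<in> bdL" for P
    using mirange[OF Lcpt Lne Lsph] unitL that by (auto simp: bdL_def)
  have hyp: "mi L P = \<kappa>" if P: "P \<in> bdL" for P
  proof -
    have "width P (sph_wulff \<gamma>) = Delta (sph_wulff \<gamma>)" using DK suppK P by blast
    moreover have "width P0 (sph_wulff \<gamma>) = Delta (sph_wulff \<gamma>)" using DK suppK P0 by blast
    ultimately have "arccos (mi L P) = arccos (mi L P0)" using widthK[OF P] widthK[OF P0] by simp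
    then show ?thesis using arccos_eq_iff[of "mi L P" "mi L P0"] mrL[OF P] mrL[OF P0]
      by (simp add: \<kappa>_def abs_le_iff)
  qed
  have cwki: "cwk (sph_wulff \<gamma>) ((0::'a), (1::real)) E0 \<kappa>"
    by (rule cwk.intro[OF cwi]) (unfold cwk_axioms_def, use hyp in blast)
  interpret k: cwk "sph_wulff \<gamma>" "((0::'a), (1::real))" E0 \<kappa> by (rule cwki)
  have kr: "-1 \<le> \<kappa> \<and> \<kappa> \<le> 1" using mrL[OF P0] by (simp add: \<kappa>_def)
  have "width P0 (sph_wulff \<gamma>) = Delta (sph_wulff \<gamma>)" using DK suppK P0 by blast
  then have DeltaK: "Delta (sph_wulff \<gamma>) = pi - arccos \<kappa>"
    using widthK[OF P0] by (simp add: \<kappa>_def)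
  have diamL: "sph_diam L = arccos \<kappa>"
    using diam_eq[OF Lcpt Lne Lsph] k.C1 by simp
  have diamK: "sph_diam (sph_wulff \<gamma>) = pi - arccos \<kappa>"
    using diam_eq[OF Kcpt Kne Ksph] k.mdK arccos_minus[of \<kappa>] kr by simp
  have suppL: "supporting X L \<longleftrightarrow> X \<in> bdK" for X
    using supporting_iff[OF Lcl Lsph, of X] KpolL by (simp add: bdK_def)
  have widthL: "width X L = arccos \<kappa>" if X: "X \<in> bdK" for X
  proof -
    have XK: "X \<in> K" using X by (simp add: bdK_def K_def)
    obtain P where P: "P \<in> L" "X \<bullet> P = 0" using X by (auto simp: bdK_def)
    have "X \<noteq> (0, 1)"
    proof
      assume "X = (0, 1)"
      then show False using Lpos[OF P(1)] P(2) by (simp add: inner_commute)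
    qed
    moreover have "compact (pol L)" using Kcpt KpolL by simp
    moreover have "- X \<notin> pol L" using negK[of X] XK KpolL by (simp add: K_def)
    moreover have "(0, 1) \<in> pol L" using NK KpolL by simp
    ultimately have "width X L = pi - arccos (mi (pol L) X)"
      using width_eq[OF Lsph, of X "(0,1)"] unitK[of X] XK by (simp add: K_def)
    also have "mi (pol L) X = - \<kappa>" using k.miK_bd[OF X] KpolL by simp
    finally show ?thesis using arccos_minus[of \<kappa>] kr by simp
  qed
  have exL: "\<exists>w. \<forall>X. supporting X L \<longrightarrow> width X L = w"
    using widthL suppL by blast
  have DL: "\<forall>X. supporting X L \<longrightarrow> width X L = Delta L"
    unfolding Delta_def by (rule someI_ex[OF exL])
  obtain X0 where X0: "X0 \<in> bdK" using k.bdK_ne by blast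
  have "width X0 L = Delta L" using DL suppL X0 by blast
  then have DeltaL: "Delta L = arccos \<kappa>" using widthL[OF X0] by simp
  show ?thesis unfolding polK using DeltaK DeltaL diamK diamL by simp
qed


end
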